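(* Assume (A1)–(A5) from the context. Let $T\ge1$, and let the step sizes $\alpha,\beta>0$ satisfy $$0<\alpha(\rho+L)+4\alpha^2L^2\le\min\left\{\tfrac12,\ \frac{4\mu(\rho+L)+64L^2}{\mu^2}\right\}$$ and $$12(6+\delta)\beta^2K^2L^2\le\min\left\{\tfrac1{16},\ 1-\tfrac{\alpha\mu}{4}\right\},\qquad\text{where }\delta=\frac1{(1-\alpha\rho)^2}.$$ Then the iterates generated by FedCanon satisfy $$\mathbb{E}[\phi(z^T)-\phi^*]+\alpha\mathcal{E}^T\le\left(1-\frac{\alpha\mu}{4}\right)^T\left[\phi(z^0)-\phi^*+\alpha\mathcal{E}^0\right]+\frac{25\sigma^2}{\mu BK}+\frac{\sigma^2}{16\mu B}+\frac{B_h}{2\mu}.$$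
   Context: Let $N,d,K,B$ be positive integers and $[N]=\{1,\dots,N\}$. For each client $i\in[N]$ let $f_i(x)=\mathbb{E}_{\xi\sim\mathcal{D}_i}[F_i(x;\xi)]$. Let $f=\frac1N\sum_{i=1}^N f_i$, let $h:\mathbb{R}^d\to\mathbb{R}\cup\{+\infty\}$, and let $\phi=f+h$. Standing assumptions: (A1) $\phi^*:=\inf_z\phi(z)>-\infty$. (A2) There is $L>0$ such that for every $i$ and all $x,y$: $f_i(x)-f_i(y)-\langle\nabla f_i(y),x-y\rangle\le \frac L2\Vert x-y\Vert^2$ and $\Vert\nabla f_i(x)-\nabla f_i(y)\Vert\le L\Vert x-y\Vert$. (A3) $h$ is proper, closed and $\rho$-weakly convex for some $\rho\ge0$, i.e. $h(z)+\frac{\rho}{2}\Vert z\Vert^2$ is convex. There is a constant $B_h$ such that $\Vert h'(z)\Vert^2\le B_h$ for every $z$ and every subgradient $h'(z)\in\partial h(z)$. (A4) Whenever client $i$ evaluates $g_i(x)$, it draws $B$ fresh samples $\xi_{i,1},\dots,\xi_{i,B}\sim\mathcal{D}_i$, independent of the past, and sets $g_i(x)=\frac1B\sum_{b}\nabla F_i(x;\xi_{i,b})$. Conditionally on the past, $\mathbb{E}[g_i(x)]=\nabla f_i(x)$ and $\mathbb{E}\Vert g_i(x)-\nabla f_i(x)\Vert^2\le\sigma^2/B$. (A5) (Generalized PL condition) There is $\mu>0$ such that for all $z\in\mathbb{R}^d$, $\Vert G^\alpha(z)\Vert^2\ge2\mu[\phi(z)-\phi^*]$. Proximal operator: $\mathbf{prox}_{\alpha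 h}\{y\}=\arg\min_x\{h(x)+\frac1{2\alpha}\Vert x-y\Vert^2\}$. Algorithm FedCanon. The inputs are $\alpha,\beta>0$, an initial point $z^0$, and control variables $c_i^0$ with $\sum_ic_i^0=\mathbf{0}_d$. For $t=0,1,\dots$: - every client $i$ sets $\hat x_i^{t,0}=z^t$; - for $k=0,\dots,K-1$ it updates $\hat x_i^{t,k+1}=\hat x_i^{t,k}-\beta[g_i(\hat x_i^{t,k})+c_i^t]$; - it forms $\Delta_i^{t+1}=\frac1{\beta K}(z^t-\hat x_i^{t,K})$; - the server computes $\bar\Delta^{t+1}=\frac1N\sum_i\Delta_i^{t+1}$ and $z^{t+1}=\mathbf{prox}_{\alpha h}\{z^t-\alpha\bar\Delta^{t+1}\}$; - every client updates $c_i^{t+1}=c_i^t+\bar\Delta^{t+1}-\Delta_i^{t+1}$. (The variant FedCanon II, with local prox steps from a common initialization, generates the same sequence.) Notation: - $G^\alpha(z,u)=\frac1\alpha(z-\mathbf{prox}_{\alpha h}\{z-\alpha u\})$ and $G^\alpha(z)=G^\alpha(z,\nabla f(z))$. - $v_i^t=\frac1K\sum_{k=0}^{K-1}g_i(\hat x_i^{t,k})$ and $\bar v^t=\frac1N\sum_iv_i^t$. - $\mathcal{E}^t=\frac1N\sum_i\mathbb{E}\Vert\nabla f_i(z^t)+c_i^t-\nabla f(z^t)\Vert^2$. For $t\ge1$ this equals $\frac1N\sum_i\mathbb{E}\Vert\nabla f_i(\hat x_i^{t,0})-v_i^{t-1}-\nabla f(z^t)+\bar v^{t-1}\Vert^2$.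 - $\mathbb{E}$ is expectation over all sampling. *)

theory Defs
  imports "HOL-Probability.Probability"
begin

text \<open>Proximal operator: a minimiser of h(x) + norm(x - y)^2 / (2 alpha).
  (Unique whenever alpha * rho < 1, which the step-size hypotheses guarantee.)\<close>
definition prox :: "real \<Rightarrow> ('a::real_normed_vector \<Rightarrow> real) \<Rightarrow> 'a \<Rightarrow> 'a" where
  "prox \<alpha> h y = (SOME x. \<forall>u. h x + (norm (x - y))\<^sup>2 / (2 * \<alpha>) \<le> h u + (norm (u - y))\<^sup>2 / (2 * \<alpha>))"

text \<open>(Regular / Frechet) subdifferential; for weakly convex h it coincides with the
  usual convex-analytic one shifted by the quadratic.\<close>
definition subdiff :: "('a::real_inner \<Rightarrow> real) \<Rightarrow> 'a \<Rightarrow> 'a set" where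
  "subdiff h z = {v. \<forall>\<epsilon>>0. \<exists>\<delta>>0. \<forall>y. norm (y - z) < \<delta> \<longrightarrow>
                      h y \<ge> h z + inner v (y - z) - \<epsilon> * norm (y - z)}"

definition Gmap :: "real \<Rightarrow> ('a::real_normed_vector \<Rightarrow> real) \<Rightarrow> 'a \<Rightarrow> 'a \<Rightarrow> 'a" where
  "Gmap \<alpha> h z u = (1 / \<alpha>) *\<^sub>R (z - prox \<alpha> h (z - \<alpha> *\<^sub>R u))"

text \<open>Local iterates of client i in a round: xhat^{t,k}. Argument xi k b is the b-th
  sample drawn at local step k (of this round, this client); c is the control variable.\<close>
primrec xhat :: "(nat \<Rightarrow> 'a::real_vector \<Rightarrow> 'b \<Rightarrow> 'a) \<Rightarrow> nat \<Rightarrow> real \<Rightarrow> nat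
                 \<Rightarrow> (nat \<Rightarrow> nat \<Rightarrow> 'b) \<Rightarrow> 'a \<Rightarrow> 'a \<Rightarrow> nat \<Rightarrow> 'a" where
  "xhat gF B \<beta> i xi c z 0 = z"
| "xhat gF B \<beta> i xi c z (Suc k) =
     (let x = xhat gF B \<beta> i xi c z k
      in x - \<beta> *\<^sub>R ((1 / real B) *\<^sub>R (\<Sum>b<B. gF i x (xi k b)) + c))"

definition Delta :: "(nat \<Rightarrow> 'a::real_vector \<Rightarrow> 'b \<Rightarrow> 'a) \<Rightarrow> nat \<Rightarrow> nat \<Rightarrow> real \<Rightarrow> nat
                 \<Rightarrow> (nat \<Rightarrow> nat \<Rightarrow> 'b) \<Rightarrow> 'a \<Rightarrow> 'a \<Rightarrow> 'a" where
  "Delta gF K B \<beta> i xi c z = (1 / (\<beta> * real K)) *\<^sub>R (z - xhat gF B \<beta> i xi c z K)"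

text \<open>FedCanon: returns (z^t, c^t) where c^t i is the control variable of client i
  (clients are indexed 0..N-1).  xi t i k b is the b-th sample drawn by client i at local
  step k of round t.\<close>
primrec fedcanon :: "(nat \<Rightarrow> 'a::real_normed_vector \<Rightarrow> 'b \<Rightarrow> 'a) \<Rightarrow> ('a \<Rightarrow> real)
      \<Rightarrow> nat \<Rightarrow> nat \<Rightarrow> nat \<Rightarrow> real \<Rightarrow> real \<Rightarrow> 'a \<Rightarrow> (nat \<Rightarrow> 'a)
      \<Rightarrow> (nat \<Rightarrow> nat \<Rightarrow> nat \<Rightarrow> nat \<Rightarrow> 'b) \<Rightarrow> nat \<Rightarrow> 'a \<times> (nat \<Rightarrow> 'a)" where
  "fedcanon gF h N K B \<alpha> \<beta> z0 c0 xi 0 = (z0, c0)"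
| "fedcanon gF h N K B \<alpha> \<beta> z0 c0 xi (Suc t) =
     (let zc = fedcanon gF h N K B \<alpha> \<beta> z0 c0 xi t;
          z = fst zc; c = snd zc;
          D = (\<lambda>i. Delta gF K B \<beta> i (xi t i) (c i) z);
          Dbar = (1 / real N) *\<^sub>R (\<Sum>i<N. D i)
      in (prox \<alpha> h (z - \<alpha> *\<^sub>R Dbar), \<lambda>i. c i + Dbar - D i))"

end

theory Submission
  imports Defs
begin


lemma nsq_add: "(norm (a + b))\<^sup>2 = (norm a)\<^sup>2 + 2 * inner a b + (norm (b::'a::real_inner))\<^sup>2"
  using dot_norm[of a b] by simp

lemma nsq_diff: "(norm (a - b))\<^sup>2 = (norm a)\<^sup>2 - 2 * inner a b + (norm (b::'a::real_inner))\<^sup>2"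
  using nsq_add[of a "-b"] by simp

lemma eps_le:
  fixes a b n :: real
  assumes "n \<ge> 0" "\<And>e. e > 0 \<Longrightarrow> a \<ge> b - e * n"
  shows "a \<ge> b"
proof (rule ccontr)
  assume "\<not> a \<ge> b"
  then have d: "b - a > 0" by simp
  define e where "e = (b - a) / (2 * (n + 1))"
  have e0: "e > 0" using d assms(1) by (simp add: e_def)
  have "e * n \<le> e * (n + 1)" using e0 by simp
  also have "\<dots> = (b - a) / 2" using assms(1) by (simp add: e_def field_simps)
  finally have "e * n < b - a" using d by simp
  with assms(2)[OF e0] show False by simp
qed

lemma wc_subgrad:
  fixes h :: "'a::euclidean_space \<Rightarrow> real"
  assumes wc: "convex_on UNIV (\<lambda>x. h x + \<rho> / 2 * (norm x)\<^sup>2)" and rho: "\<rho> \<ge> 0"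
    and v: "v \<in> subdiff h x"
  shows "h y \<ge> h x + inner v (y - x) - \<rho> / 2 * (norm (y - x))\<^sup>2"
proof -
  define d where "d = y - x"
  define g where "g = (\<lambda>x. h x + \<rho> / 2 * (norm x)\<^sup>2)"
  have key: "h y \<ge> h x + inner v d - \<rho> / 2 * (norm d)\<^sup>2 - e * norm d" if e: "e > 0" for e
  proof (cases "d = 0")
    case True then show ?thesis by (simp add: d_def)
  next
    case False
    then have nd: "norm d > 0" by simp
    from v e obtain \<delta> where \<delta>: "\<delta> > 0" and hd: "\<And>y'. norm (y' - x) < \<delta> \<Longrightarrow>
        h y' \<ge> h x + inner v (y' - x) - e * norm (y' - x)"
      unfolding subdiff_def by blast
    define t where "t = min 1 (\<delta> / (2 * norm d))"
    have t0: "t > 0" using \<delta> nd by (simp add: t_def)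
    have t1: "t \<le> 1" by (simp add: t_def)
    have "t * norm d \<le> \<delta> / (2 * norm d) * norm d"
      by (rule mult_right_mono) (auto simp: t_def)
    also have "\<dots> = \<delta> / 2" using nd by simp
    finally have tnd: "norm (t *\<^sub>R d) < \<delta>" using \<delta> t0 by simp
    have hx: "h x + t * inner v d - e * (t * norm d) \<le> h (x + t *\<^sub>R d)"
      using hd[of "x + t *\<^sub>R d"] tnd t0 by simp
    have cv: "g ((1 - t) *\<^sub>R x + t *\<^sub>R y) \<le> (1 - t) * g x + t * g y"
      using convex_onD[OF wc[folded g_def], of t x y] t0 t1 by simp
    have eqp: "(1 - t) *\<^sub>R x + t *\<^sub>R y = x + t *\<^sub>R d"
      by (simp add: d_def algebra_simps)
    have n1: "(norm (x + t *\<^sub>R d))\<^sup>2 = (norm x)\<^sup>2 + 2 * t * inner x d + t\<^sup>2 * (norm d)\<^sup>2"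
      by (simp add: nsq_add power_mult_distrib)
    have n2: "(norm y)\<^sup>2 = (norm x)\<^sup>2 + 2 * inner x d + (norm d)\<^sup>2"
      using nsq_add[of x d] by (simp add: d_def)
    have b: "h (x + t *\<^sub>R d) + \<rho> / 2 * ((norm x)\<^sup>2 + 2 * t * inner x d + t\<^sup>2 * (norm d)\<^sup>2)
          \<le> (1 - t) * (h x + \<rho> / 2 * (norm x)\<^sup>2) + t * (h y + \<rho> / 2 * ((norm x)\<^sup>2 + 2 * inner x d + (norm d)\<^sup>2))"
      using cv unfolding eqp g_def n1 n2[symmetric] by simp
    have e1: "(1 - t) * (h x + \<rho> / 2 * (norm x)\<^sup>2) + t * (h y + \<rho> / 2 * ((norm x)\<^sup>2 + 2 * inner x d + (norm d)\<^sup>2))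
         - \<rho> / 2 * ((norm x)\<^sup>2 + 2 * t * inner x d + t\<^sup>2 * (norm d)\<^sup>2)
       = h x - t * h x + t * h y + \<rho> / 2 * t * (norm d)\<^sup>2 - \<rho> / 2 * (t\<^sup>2 * (norm d)\<^sup>2)"
      by (simp add: field_simps power2_eq_square)
    have e2: "t * (h x + inner v d - \<rho> / 2 * (norm d)\<^sup>2 - e * norm d) =
        t * h x + t * inner v d - \<rho> / 2 * t * (norm d)\<^sup>2 - e * (t * norm d)"
      by (simp add: algebra_simps)
    have pos: "\<rho> / 2 * (t\<^sup>2 * (norm d)\<^sup>2) \<ge> 0" using rho by simp
    have "t * (h x + inner v d - \<rho> / 2 * (norm d)\<^sup>2 - e * norm d) \<le> t * h y"
      using hx b e1 e2 pos by argo
    then show ?thesis using t0 by simp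
  qed
  have "h y \<ge> h x + inner v d - \<rho> / 2 * (norm d)\<^sup>2"
    by (rule eps_le[OF _ key]) auto
  then show ?thesis by (simp add: d_def)
qed

lemma argmin_exists:
  fixes \<psi> :: "'a::euclidean_space \<Rightarrow> real"
  assumes cont: "continuous_on UNIV \<psi>" and a: "a > 0"
    and lb: "\<And>u. \<psi> u \<ge> m + a * (norm u)\<^sup>2 - b * norm u"
  shows "\<exists>w. \<forall>u. \<psi> w \<le> \<psi> u"
proof -
  define R where "R = max (norm (0::'a)) (max (2 * \<bar>b\<bar> / a) (sqrt (2 * (\<bar>\<psi> 0 - m\<bar> + 1) / a)))"
  have R0: "R \<ge> 0" by (simp add: R_def)
  obtain w where w: "w \<in> cball 0 R" and wmin: "\<And>u. u \<in> cball 0 R \<Longrightarrow> \<psi> w \<le> \<psi> u"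
    using continuous_attains_inf[of "cball (0::'a) R" \<psi>] cont R0
    by (metis compact_cball continuous_on_subset empty_iff mem_cball_0 norm_zero subset_UNIV)
  have "\<psi> w \<le> \<psi> u" for u
  proof (cases "norm u \<le> R")
    case True then show ?thesis using wmin by simp
  next
    case False
    then have uR: "norm u > R" by simp
    have "R \<ge> 2 * \<bar>b\<bar> / a" by (simp add: R_def)
    then have "R * a \<ge> 2 * \<bar>b\<bar>" using a by (simp add: field_simps)
    moreover have "R * a \<le> norm u * a" using uR a by simp
    ultimately have "a * norm u \<ge> 2 * \<bar>b\<bar>" by (simp add: mult.commute)
    then have "a * norm u - b \<ge> a * norm u / 2" by linarith
    then have s1: "norm u * (a * norm u - b) \<ge> norm u * (a * norm u / 2)"
      by (rule mult_left_mono) simp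
    have "R \<ge> sqrt (2 * (\<bar>\<psi> 0 - m\<bar> + 1) / a)" by (simp add: R_def)
    then have "(norm u)\<^sup>2 \<ge> (sqrt (2 * (\<bar>\<psi> 0 - m\<bar> + 1) / a))\<^sup>2"
      using uR a by (intro power_mono) auto
    also have "(sqrt (2 * (\<bar>\<psi> 0 - m\<bar> + 1) / a))\<^sup>2 = 2 * (\<bar>\<psi> 0 - m\<bar> + 1) / a"
      using a by simp
    finally have "a * (norm u)\<^sup>2 \<ge> 2 * (\<bar>\<psi> 0 - m\<bar> + 1)" using a by (simp add: field_simps)
    then have "norm u * (a * norm u / 2) \<ge> \<bar>\<psi> 0 - m\<bar> + 1" by (simp add: power2_eq_square algebra_simps)
    moreover have "\<psi> 0 - m \<le> \<bar>\<psi> 0 - m\<bar>" by simp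
    moreover have "norm u * (a * norm u - b) = a * (norm u)\<^sup>2 - b * norm u"
      by (simp add: algebra_simps power2_eq_square)
    ultimately have "m + a * (norm u)\<^sup>2 - b * norm u > \<psi> 0"
      using s1 by argo
    with lb[of u] have "\<psi> u > \<psi> 0" by simp
    moreover have "\<psi> w \<le> \<psi> 0" using wmin R0 by simp
    ultimately show ?thesis by simp
  qed
  then show ?thesis by blast
qed

lemma convex_lower_bound:
  fixes g :: "'a::euclidean_space \<Rightarrow> real"
  assumes cv: "convex_on UNIV g"
  shows "\<exists>m C. C \<ge> 0 \<and> (\<forall>x. g x \<ge> m - C * norm x)"
proof -
  have cont: "continuous_on UNIV g" using convex_on_continuous[OF _ cv] by simp
  obtain x0 where x0: "x0 \<in> cball (0::'a) 1" and x0m: "\<And>x. x \<in> cball 0 1 \<Longrightarrow> g x0 \<le> g x"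
    using continuous_attains_inf[of "cball (0::'a) 1" g] cont
    by (metis compact_cball continuous_on_subset empty_iff mem_cball_0 norm_zero zero_le_one subset_UNIV)
  define m where "m = g x0"
  have m0: "m \<le> g 0" using x0m[of 0] by (simp add: m_def)
  have "g x \<ge> m - (g 0 - m) * norm x" for x
  proof (cases "norm x \<le> 1")
    case True
    then have "g x \<ge> m" using x0m by (simp add: m_def)
    moreover have "(g 0 - m) * norm x \<ge> 0" using m0 by simp
    ultimately show ?thesis by linarith
  next
    case False
    have xn0: "x \<noteq> 0" using False by auto
    define t where "t = 1 / norm x"
    have t0: "t > 0" "t \<le> 1" using False by (auto simp: t_def divide_le_eq)
    have "g ((1 - t) *\<^sub>R 0 + t *\<^sub>R x) \<le> (1 - t) * g 0 + t * g x"
      using convex_onD[OF cv, of t 0 x] t0 by simp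
    moreover have "norm (t *\<^sub>R x) = 1" using False by (auto simp: t_def)
    then have "g (t *\<^sub>R x) \<ge> m" using x0m by (simp add: m_def)
    ultimately have "t * g x \<ge> m - (1 - t) * g 0" by simp
    then have "norm x * (t * g x) \<ge> norm x * (m - (1 - t) * g 0)"
      by (rule mult_left_mono) simp
    moreover have "norm x * t = 1" using xn0 by (simp add: t_def)
    then have "norm x * (t * g x) = g x" "norm x * (m - (1 - t) * g 0) = norm x * m - norm x * g 0 + g 0"
      by (simp_all add: algebra_simps mult.assoc[symmetric])
    ultimately have "g x \<ge> norm x * m - norm x * g 0 + g 0"
      by simp
    moreover have "norm x * m - norm x * g 0 + g 0 \<ge> m - (g 0 - m) * norm x"
      using m0 False by (simp add: algebra_simps)
    ultimately show ?thesis by linarith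
  qed
  then show ?thesis using m0 by (intro exI[of _ m] exI[of _ "g 0 - m"]) auto
qed

lemma prox_min:
  fixes h :: "'a::euclidean_space \<Rightarrow> real"
  assumes wc: "convex_on UNIV (\<lambda>x. h x + \<rho> / 2 * (norm x)\<^sup>2)" and rho: "\<rho> \<ge> 0"
    and al: "\<alpha> > 0" "\<alpha> * \<rho> < 1"
  shows "h (prox \<alpha> h y) + (norm (prox \<alpha> h y - y))\<^sup>2 / (2 * \<alpha>) \<le> h u + (norm (u - y))\<^sup>2 / (2 * \<alpha>)"
proof -
  define g where "g = (\<lambda>x. h x + \<rho> / 2 * (norm x)\<^sup>2)"
  have cg: "continuous_on UNIV g" using convex_on_continuous[OF _ wc] by (simp add: g_def)
  have hg: "h = (\<lambda>x. g x - \<rho> / 2 * (norm x)\<^sup>2)" by (simp add: g_def)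
  have ch: "continuous_on UNIV h" unfolding hg by (intro continuous_intros cg)
  define \<psi> where "\<psi> = (\<lambda>u. h u + (norm (u - y))\<^sup>2 / (2 * \<alpha>))"
  have cpsi: "continuous_on UNIV \<psi>" unfolding \<psi>_def by (intro continuous_intros ch) (use al in auto)
  obtain m C where C: "C \<ge> 0" and mC: "\<And>x. g x \<ge> m - C * norm x"
    using convex_lower_bound[OF wc[folded g_def]] by blast
  define a where "a = 1 / (2 * \<alpha>) - \<rho> / 2"
  have a0: "a > 0" using al by (simp add: a_def field_simps)
  define b where "b = C + norm y / \<alpha>"
  have lb: "\<psi> u \<ge> m + a * (norm u)\<^sup>2 - b * norm u" for u
  proof -
    have "inner u y \<le> norm u * norm y" by (rule norm_cauchy_schwarz)
    moreover have "(norm y)\<^sup>2 \<ge> 0" by simp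
    ultimately have "(norm (u - y))\<^sup>2 \<ge> (norm u)\<^sup>2 - 2 * (norm u * norm y)"
      using nsq_diff[of u y] by linarith
    then have "(norm (u - y))\<^sup>2 / (2 * \<alpha>) \<ge> ((norm u)\<^sup>2 - 2 * (norm u * norm y)) / (2 * \<alpha>)"
      using al by (intro divide_right_mono) auto
    moreover have "((norm u)\<^sup>2 - 2 * (norm u * norm y)) / (2 * \<alpha>) = (norm u)\<^sup>2 / (2 * \<alpha>) - norm u * (norm y / \<alpha>)"
      using al by (simp add: field_simps)
    moreover have "a * (norm u)\<^sup>2 - b * norm u = (norm u)\<^sup>2 / (2 * \<alpha>) - \<rho> / 2 * (norm u)\<^sup>2 - C * norm u - norm u * (norm y / \<alpha>)"
      by (simp add: a_def b_def algebra_simps)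
    moreover have "h u = g u - \<rho> / 2 * (norm u)\<^sup>2" by (simp add: g_def)
    ultimately show ?thesis using mC[of u] unfolding \<psi>_def by argo
  qed
  have ex: "\<exists>w. \<forall>u. \<psi> w \<le> \<psi> u" by (rule argmin_exists[OF cpsi a0 lb])
  then have "\<forall>u. \<psi> (prox \<alpha> h y) \<le> \<psi> u"
    unfolding prox_def \<psi>_def by (rule someI_ex)
  then show ?thesis by (simp add: \<psi>_def)
qed

lemma prox_subdiff:
  fixes h :: "'a::euclidean_space \<Rightarrow> real"
  assumes wc: "convex_on UNIV (\<lambda>x. h x + \<rho> / 2 * (norm x)\<^sup>2)" and rho: "\<rho> \<ge> 0"
    and al: "\<alpha> > 0" "\<alpha> * \<rho> < 1"
  shows "(1 / \<alpha>) *\<^sub>R (y - prox \<alpha> h y) \<in> subdiff h (prox \<alpha> h y)"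
proof -
  define w where "w = prox \<alpha> h y"
  have key: "h u \<ge> h w + inner ((1 / \<alpha>) *\<^sub>R (y - w)) (u - w) - (norm (u - w))\<^sup>2 / (2 * \<alpha>)" for u
  proof -
    have m: "h w + (norm (w - y))\<^sup>2 / (2 * \<alpha>) \<le> h u + (norm (u - y))\<^sup>2 / (2 * \<alpha>)"
      using prox_min[OF wc rho al] by (simp add: w_def)
    have "u - y = (u - w) + (w - y)" by simp
    then have "(norm (u - y))\<^sup>2 = (norm (u - w))\<^sup>2 + 2 * inner (u - w) (w - y) + (norm (w - y))\<^sup>2"
      using nsq_add by metis
    then have "(norm (u - y))\<^sup>2 / (2 * \<alpha>) = ((norm (u - w))\<^sup>2 + 2 * inner (u - w) (w - y) + (norm (w - y))\<^sup>2) / (2 * \<alpha>)"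
      by simp
    also have "\<dots> = (norm (u - w))\<^sup>2 / (2 * \<alpha>) - inner ((1 / \<alpha>) *\<^sub>R (y - w)) (u - w) + (norm (w - y))\<^sup>2 / (2 * \<alpha>)"
      using al by (simp add: field_simps inner_commute inner_diff_left inner_diff_right)
    finally have "(norm (u - y))\<^sup>2 / (2 * \<alpha>) = (norm (u - w))\<^sup>2 / (2 * \<alpha>) - inner ((1 / \<alpha>) *\<^sub>R (y - w)) (u - w) + (norm (w - y))\<^sup>2 / (2 * \<alpha>)" .
    with m show ?thesis by simp
  qed
  show ?thesis unfolding subdiff_def
  proof (intro CollectI allI impI)
    fix e :: real assume e: "e > 0"
    show "\<exists>\<delta>>0. \<forall>ya. norm (ya - prox \<alpha> h y) < \<delta> \<longrightarrow>
      h (prox \<alpha> h y) + inner ((1 / \<alpha>) *\<^sub>R (y - prox \<alpha> h y)) (ya - prox \<alpha> h y) - e * norm (ya - prox \<alpha> h y) \<le> h ya"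
    proof (intro exI[of _ "2 * \<alpha> * e"] conjI allI impI)
      show "2 * \<alpha> * e > 0" using al e by simp
      fix u assume u: "norm (u - prox \<alpha> h y) < 2 * \<alpha> * e"
      have "(norm (u - w))\<^sup>2 = norm (u - w) * norm (u - w)" by (simp add: power2_eq_square)
      also have "\<dots> \<le> norm (u - w) * (2 * \<alpha> * e)"
        using u by (intro mult_left_mono) (auto simp: w_def)
      finally have "(norm (u - w))\<^sup>2 / (2 * \<alpha>) \<le> e * norm (u - w)"
        using al by (simp add: field_simps)
      with key[of u] show "h (prox \<alpha> h y) + inner ((1 / \<alpha>) *\<^sub>R (y - prox \<alpha> h y)) (u - prox \<alpha> h y) - e * norm (u - prox \<alpha> h y) \<le> h u"
        by (simp add: w_def)
    qed
  qed
qed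

lemma prox_lip:
  fixes h :: "'a::euclidean_space \<Rightarrow> real"
  assumes wc: "convex_on UNIV (\<lambda>x. h x + \<rho> / 2 * (norm x)\<^sup>2)" and rho: "\<rho> \<ge> 0"
    and al: "\<alpha> > 0" "\<alpha> * \<rho> < 1"
  shows "(1 - \<alpha> * \<rho>) * norm (prox \<alpha> h y1 - prox \<alpha> h y2) \<le> norm (y1 - y2)"
proof -
  define w1 where "w1 = prox \<alpha> h y1"
  define w2 where "w2 = prox \<alpha> h y2"
  have s1: "(1 / \<alpha>) *\<^sub>R (y1 - w1) \<in> subdiff h w1" using prox_subdiff[OF wc rho al] by (simp add: w1_def)
  have s2: "(1 / \<alpha>) *\<^sub>R (y2 - w2) \<in> subdiff h w2" using prox_subdiff[OF wc rho al] by (simp add: w2_def)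
  have i1: "h w2 \<ge> h w1 + inner ((1 / \<alpha>) *\<^sub>R (y1 - w1)) (w2 - w1) - \<rho> / 2 * (norm (w2 - w1))\<^sup>2"
    by (rule wc_subgrad[OF wc rho s1])
  have i2: "h w1 \<ge> h w2 + inner ((1 / \<alpha>) *\<^sub>R (y2 - w2)) (w1 - w2) - \<rho> / 2 * (norm (w1 - w2))\<^sup>2"
    by (rule wc_subgrad[OF wc rho s2])
  have nn: "norm (w2 - w1) = norm (w1 - w2)" by (rule norm_minus_commute)
  have "inner ((1 / \<alpha>) *\<^sub>R (y1 - w1)) (w2 - w1) + inner ((1 / \<alpha>) *\<^sub>R (y2 - w2)) (w1 - w2)
      = - (1 / \<alpha>) * inner ((y1 - y2) - (w1 - w2)) (w1 - w2)"
    by (simp add: inner_diff_left inner_diff_right algebra_simps inner_commute)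
  also have "inner ((y1 - y2) - (w1 - w2)) (w1 - w2) = inner (y1 - y2) (w1 - w2) - (norm (w1 - w2))\<^sup>2"
    by (simp add: inner_diff_left power2_norm_eq_inner)
  finally have eqA: "inner ((1 / \<alpha>) *\<^sub>R (y1 - w1)) (w2 - w1) + inner ((1 / \<alpha>) *\<^sub>R (y2 - w2)) (w1 - w2)
      = - ((1 / \<alpha>) * (inner (y1 - y2) (w1 - w2) - (norm (w1 - w2))\<^sup>2))" by simp
  have "\<rho> / 2 * (norm (w1 - w2))\<^sup>2 + \<rho> / 2 * (norm (w1 - w2))\<^sup>2 = \<rho> * (norm (w1 - w2))\<^sup>2" by simp
  then have "(1 / \<alpha>) * (inner (y1 - y2) (w1 - w2) - (norm (w1 - w2))\<^sup>2) \<ge> - \<rho> * (norm (w1 - w2))\<^sup>2"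
    using i1 i2 eqA unfolding nn by linarith
  then have "inner (y1 - y2) (w1 - w2) - (norm (w1 - w2))\<^sup>2 \<ge> - \<alpha> * \<rho> * (norm (w1 - w2))\<^sup>2"
    using al by (simp add: field_simps)
  then have "(1 - \<alpha> * \<rho>) * (norm (w1 - w2))\<^sup>2 \<le> inner (y1 - y2) (w1 - w2)"
    by (simp add: algebra_simps)
  also have "\<dots> \<le> norm (y1 - y2) * norm (w1 - w2)" by (rule norm_cauchy_schwarz)
  finally have "((1 - \<alpha> * \<rho>) * norm (w1 - w2)) * norm (w1 - w2) \<le> norm (y1 - y2) * norm (w1 - w2)"
    by (simp add: power2_eq_square mult.assoc)
  then have "(1 - \<alpha> * \<rho>) * norm (w1 - w2) \<le> norm (y1 - y2)"
    by (cases "norm (w1 - w2) = 0") (auto simp: mult_le_cancel_right)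
  then show ?thesis by (simp add: w1_def w2_def)
qed




lemma young_nsq:
  fixes x y :: "'a::real_inner"
  assumes l: "l > 0"
  shows "(norm (x + y))\<^sup>2 \<le> (1 + l) * (norm x)\<^sup>2 + (1 + 1 / l) * (norm y)\<^sup>2"
proof -
  have "inner x y \<le> norm x * norm y" by (rule norm_cauchy_schwarz)
  moreover have "2 * (norm x * norm y) \<le> l * (norm x)\<^sup>2 + (1 / l) * (norm y)\<^sup>2"
  proof -
    have "0 \<le> (sqrt l * norm x - norm y / sqrt l)\<^sup>2" by simp
    also have "\<dots> = (sqrt l)\<^sup>2 * (norm x)\<^sup>2 - 2 * (sqrt l * norm x) * (norm y / sqrt l) + (norm y)\<^sup>2 / (sqrt l)\<^sup>2"
      by (simp add: power2_diff power_mult_distrib power_divide)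
    also have "\<dots> = l * (norm x)\<^sup>2 - 2 * (norm x * norm y) + (1 / l) * (norm y)\<^sup>2"
      using l by simp
    finally show ?thesis by simp
  qed
  ultimately show ?thesis using nsq_add[of x y] by (simp add: algebra_simps)
qed

lemma jensen_nsq:
  fixes x :: "'i \<Rightarrow> 'a::real_normed_vector"
  assumes "finite I"
  shows "(norm (\<Sum>i\<in>I. x i))\<^sup>2 \<le> real (card I) * (\<Sum>i\<in>I. (norm (x i))\<^sup>2)"
proof -
  have "(norm (\<Sum>i\<in>I. x i))\<^sup>2 \<le> (\<Sum>i\<in>I. norm (x i))\<^sup>2"
    by (intro power_mono norm_sum) simp
  also have "\<dots> \<le> (\<Sum>i\<in>I. (norm (x i))\<^sup>2) * card I" by (rule sum_squared_le_sum_of_squares)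
  finally show ?thesis by (simp add: mult.commute)
qed

lemma jensen_avg:
  fixes x :: "nat \<Rightarrow> 'a::real_normed_vector"
  assumes "N > 0"
  shows "(norm ((1 / real N) *\<^sub>R (\<Sum>i<N. x i)))\<^sup>2 \<le> (1 / real N) * (\<Sum>i<N. (norm (x i))\<^sup>2)"
proof -
  have "(norm ((1 / real N) *\<^sub>R (\<Sum>i<N. x i)))\<^sup>2 = (1 / real N)\<^sup>2 * (norm (\<Sum>i<N. x i))\<^sup>2"
    by (simp add: power_mult_distrib power_divide)
  also have "\<dots> \<le> (1 / real N)\<^sup>2 * (real N * (\<Sum>i<N. (norm (x i))\<^sup>2))"
    using jensen_nsq[of "{..<N}" x] by (intro mult_left_mono) auto
  also have "\<dots> = (1 / real N) * (\<Sum>i<N. (norm (x i))\<^sup>2)"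
    using assms by (simp add: power2_eq_square)
  finally show ?thesis .
qed

lemma variance_le:
  fixes q :: "nat \<Rightarrow> 'a::real_inner"
  assumes "N > 0"
  shows "(1 / real N) * (\<Sum>i<N. (norm (q i - (1 / real N) *\<^sub>R (\<Sum>j<N. q j)))\<^sup>2)
     \<le> (1 / real N) * (\<Sum>i<N. (norm (q i))\<^sup>2)"
proof -
  define m where "m = (1 / real N) *\<^sub>R (\<Sum>j<N. q j)"
  have sm: "(\<Sum>j<N. q j) = real N *\<^sub>R m" using assms by (simp add: m_def)
  have "(\<Sum>i<N. (norm (q i - m))\<^sup>2) = (\<Sum>i<N. (norm (q i))\<^sup>2 - 2 * inner (q i) m + (norm m)\<^sup>2)"
    by (simp add: nsq_diff)
  also have "\<dots> = (\<Sum>i<N. (norm (q i))\<^sup>2) - 2 * inner (\<Sum>i<N. q i) m + real N * (norm m)\<^sup>2"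
    by (simp add: sum.distrib sum_subtractf inner_sum_left sum_distrib_left)
  also have "\<dots> = (\<Sum>i<N. (norm (q i))\<^sup>2) - real N * (norm m)\<^sup>2"
    unfolding sm by (simp add: power2_norm_eq_inner)
  also have "\<dots> \<le> (\<Sum>i<N. (norm (q i))\<^sup>2)" by simp
  finally show ?thesis by (simp add: m_def[symmetric] divide_right_mono)
qed

lemma sum_sq_le: "3 * (\<Sum>k<n. (real k)\<^sup>2) \<le> (real n) ^ 3"
proof (induction n)
  case (Suc n)
  have "3 * (\<Sum>k<Suc n. (real k)\<^sup>2) = 3 * (\<Sum>k<n. (real k)\<^sup>2) + 3 * (real n)\<^sup>2" by simp
  also have "\<dots> \<le> (real n) ^ 3 + 3 * (real n)\<^sup>2" using Suc by simp
  also have "\<dots> \<le> (real (Suc n)) ^ 3" by (simp add: power3_eq_cube power2_eq_square algebra_simps)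
  finally show ?case .
qed simp

lemma sum_lin_le: "2 * (\<Sum>k<n. real k) \<le> (real n)\<^sup>2"
proof (induction n)
  case (Suc n)
  have "2 * (\<Sum>k<Suc n. real k) = 2 * (\<Sum>k<n. real k) + 2 * real n" by simp
  also have "\<dots> \<le> (real n)\<^sup>2 + 2 * real n" using Suc by simp
  also have "\<dots> \<le> (real (Suc n))\<^sup>2" by (simp add: power2_eq_square algebra_simps)
  finally show ?case .
qed simp

lemma drift_path:
  fixes x H Nn :: "nat \<Rightarrow> 'a::real_inner"
  assumes x0: "x 0 = z" and step: "\<And>k. x (Suc k) = x k - \<beta> *\<^sub>R (a + H k + Nn k)"
  shows "x k - z = - \<beta> *\<^sub>R (real k *\<^sub>R a + (\<Sum>j<k. H j + Nn j))"
proof (induction k)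
  case 0 then show ?case using x0 by simp
next
  case (Suc k)
  have "x (Suc k) - z = (x k - z) - \<beta> *\<^sub>R (a + H k + Nn k)" using step by simp
  also have "\<dots> = - \<beta> *\<^sub>R (real (Suc k) *\<^sub>R a + (\<Sum>j<Suc k. H j + Nn j))"
    unfolding Suc by (simp add: algebra_simps scaleR_add_left)
  finally show ?case .
qed

lemma drift_bound:
  fixes x H Nn :: "nat \<Rightarrow> 'a::real_inner"
  assumes x0: "x 0 = z" and step: "\<And>k. x (Suc k) = x k - \<beta> *\<^sub>R (a + H k + Nn k)"
    and HL: "\<And>k. norm (H k) \<le> L * norm (x k - z)" and L0: "L \<ge> 0"
  shows "(1 - (5/2) * (\<beta> * real K * L)\<^sup>2) * (\<Sum>k<K. (norm (x k - z))\<^sup>2)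
     \<le> (5/3) * \<beta>\<^sup>2 * (real K)^3 * (norm a)\<^sup>2 + (5/4) * \<beta>\<^sup>2 * (real K)\<^sup>2 * (\<Sum>j<K. (norm (Nn j))\<^sup>2)"
proof -
  define SP where "SP = (\<Sum>j<K. (norm (x j - z))\<^sup>2)"
  define SN where "SN = (\<Sum>j<K. (norm (Nn j))\<^sup>2)"
  have SP0: "SP \<ge> 0" "SN \<ge> 0" by (simp_all add: SP_def SN_def sum_nonneg)
  have Pk: "(norm (x k - z))\<^sup>2 \<le> 5 * \<beta>\<^sup>2 * (real k)\<^sup>2 * (norm a)\<^sup>2
      + (5/2) * \<beta>\<^sup>2 * real K * L\<^sup>2 * SP + (5/2) * \<beta>\<^sup>2 * real k * SN" if k: "k < K" for k
  proof -
    define Y where "Y = (norm (real k *\<^sub>R a + ((\<Sum>j<k. H j) + (\<Sum>j<k. Nn j))))\<^sup>2"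
    have e0: "(norm (x k - z))\<^sup>2 = \<beta>\<^sup>2 * Y"
      unfolding drift_path[OF x0 step] Y_def by (simp add: power_mult_distrib sum.distrib)
    have e1: "Y \<le> (1 + 4) * (norm (real k *\<^sub>R a))\<^sup>2 + (1 + 1/4) * (norm ((\<Sum>j<k. H j) + (\<Sum>j<k. Nn j)))\<^sup>2"
      unfolding Y_def by (rule young_nsq) simp
    have e2: "(norm ((\<Sum>j<k. H j) + (\<Sum>j<k. Nn j)))\<^sup>2 \<le> (1 + 1) * (norm (\<Sum>j<k. H j))\<^sup>2 + (1 + 1/1) * (norm (\<Sum>j<k. Nn j))\<^sup>2"
      by (rule young_nsq) simp
    have e3: "(norm (\<Sum>j<k. H j))\<^sup>2 \<le> real K * (L\<^sup>2 * SP)"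
    proof -
      have h1: "(norm (\<Sum>j<k. H j))\<^sup>2 \<le> real k * (\<Sum>j<k. (norm (H j))\<^sup>2)"
        using jensen_nsq[of "{..<k}" H] by simp
      have h2: "(\<Sum>j<k. (norm (H j))\<^sup>2) \<le> (\<Sum>j<k. L\<^sup>2 * (norm (x j - z))\<^sup>2)"
      proof (rule sum_mono)
        fix j show "(norm (H j))\<^sup>2 \<le> L\<^sup>2 * (norm (x j - z))\<^sup>2"
          using power_mono[OF HL[of j]] by (simp add: power_mult_distrib)
      qed
      have h3: "(\<Sum>j<k. L\<^sup>2 * (norm (x j - z))\<^sup>2) \<le> L\<^sup>2 * SP"
        unfolding SP_def sum_distrib_left[symmetric] using k
        by (intro mult_left_mono sum_mono2) auto
      have h4: "0 \<le> (\<Sum>j<k. (norm (H j))\<^sup>2)" by (simp add: sum_nonneg)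
      have "real k * (\<Sum>j<k. (norm (H j))\<^sup>2) \<le> real K * (L\<^sup>2 * SP)"
        using h2 h3 h4 k by (intro mult_mono) auto
      with h1 show ?thesis by (simp add: algebra_simps)
    qed
    have e4: "(norm (\<Sum>j<k. Nn j))\<^sup>2 \<le> real k * SN"
    proof -
      have "(norm (\<Sum>j<k. Nn j))\<^sup>2 \<le> real k * (\<Sum>j<k. (norm (Nn j))\<^sup>2)"
        using jensen_nsq[of "{..<k}" Nn] by simp
      also have "(\<Sum>j<k. (norm (Nn j))\<^sup>2) \<le> SN"
        unfolding SN_def using k by (intro sum_mono2) auto
      finally show ?thesis by (simp add: mult_left_mono)
    qed
    have e5: "(norm (real k *\<^sub>R a))\<^sup>2 = (real k)\<^sup>2 * (norm a)\<^sup>2" by (simp add: power_mult_distrib)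
    have "Y \<le> 5 * ((real k)\<^sup>2 * (norm a)\<^sup>2) + (5/2) * (real K * (L\<^sup>2 * SP)) + (5/2) * (real k * SN)"
      using e1 e2 e3 e4 e5 by argo
    then have "\<beta>\<^sup>2 * Y \<le> \<beta>\<^sup>2 * (5 * ((real k)\<^sup>2 * (norm a)\<^sup>2) + (5/2) * (real K * (L\<^sup>2 * SP)) + (5/2) * (real k * SN))"
      by (rule mult_left_mono) simp
    then show ?thesis unfolding e0 by (simp add: algebra_simps)
  qed
  have "SP \<le> (\<Sum>k<K. 5 * \<beta>\<^sup>2 * (real k)\<^sup>2 * (norm a)\<^sup>2
      + (5/2) * \<beta>\<^sup>2 * real K * L\<^sup>2 * SP + (5/2) * \<beta>\<^sup>2 * real k * SN)"
    unfolding SP_def[of] by (rule sum_mono) (use Pk SP_def in auto)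
  also have "\<dots> = 5 * \<beta>\<^sup>2 * (norm a)\<^sup>2 * (\<Sum>k<K. (real k)\<^sup>2)
      + (5/2) * \<beta>\<^sup>2 * (real K)\<^sup>2 * L\<^sup>2 * SP + (5/2) * \<beta>\<^sup>2 * SN * (\<Sum>k<K. real k)"
    by (simp add: sum.distrib sum_distrib_left sum_distrib_right power2_eq_square algebra_simps)
  finally have s1: "SP \<le> 5 * \<beta>\<^sup>2 * (norm a)\<^sup>2 * (\<Sum>k<K. (real k)\<^sup>2)
      + (5/2) * \<beta>\<^sup>2 * (real K)\<^sup>2 * L\<^sup>2 * SP + (5/2) * \<beta>\<^sup>2 * SN * (\<Sum>k<K. real k)" .
  have s2: "5 * \<beta>\<^sup>2 * (norm a)\<^sup>2 * (\<Sum>k<K. (real k)\<^sup>2) \<le> 5 * \<beta>\<^sup>2 * (norm a)\<^sup>2 * ((real K)^3 / 3)"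
    using sum_sq_le[of K] by (intro mult_left_mono) auto
  have s3: "(5/2) * \<beta>\<^sup>2 * SN * (\<Sum>k<K. real k) \<le> (5/2) * \<beta>\<^sup>2 * SN * ((real K)\<^sup>2 / 2)"
    using sum_lin_le[of K] SP0 by (intro mult_left_mono) auto
  have s4: "(\<beta> * real K * L)\<^sup>2 = \<beta>\<^sup>2 * (real K)\<^sup>2 * L\<^sup>2" by (simp add: power_mult_distrib)
  have "(1 - (5/2) * (\<beta> * real K * L)\<^sup>2) * SP = SP - (5/2) * \<beta>\<^sup>2 * (real K)\<^sup>2 * L\<^sup>2 * SP"
    unfolding s4 by (simp add: algebra_simps)
  also have "\<dots> \<le> 5 * \<beta>\<^sup>2 * (norm a)\<^sup>2 * ((real K)^3 / 3) + (5/2) * \<beta>\<^sup>2 * SN * ((real K)\<^sup>2 / 2)"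
    using s1 s2 s3 by argo
  also have "\<dots> = (5/3) * \<beta>\<^sup>2 * (real K)^3 * (norm a)\<^sup>2 + (5/4) * \<beta>\<^sup>2 * (real K)\<^sup>2 * SN"
    by (simp add: field_simps)
  finally show ?thesis by (simp add: SP_def SN_def)
qed




lemma variance_eq:
  fixes q :: "nat \<Rightarrow> 'a::real_inner"
  assumes "N > 0"
  shows "(\<Sum>i<N. (norm (q i))\<^sup>2) = (\<Sum>i<N. (norm (q i - (1 / real N) *\<^sub>R (\<Sum>j<N. q j)))\<^sup>2)
     + real N * (norm ((1 / real N) *\<^sub>R (\<Sum>j<N. q j)))\<^sup>2"
proof -
  define m where "m = (1 / real N) *\<^sub>R (\<Sum>j<N. q j)"
  have sm: "(\<Sum>j<N. q j) = real N *\<^sub>R m" using assms by (simp add: m_def)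
  have "(\<Sum>i<N. (norm (q i - m))\<^sup>2) = (\<Sum>i<N. (norm (q i))\<^sup>2 - 2 * inner (q i) m + (norm m)\<^sup>2)"
    by (simp add: nsq_diff)
  also have "\<dots> = (\<Sum>i<N. (norm (q i))\<^sup>2) - 2 * inner (\<Sum>i<N. q i) m + real N * (norm m)\<^sup>2"
    by (simp add: sum.distrib sum_subtractf inner_sum_left sum_distrib_left)
  also have "\<dots> = (\<Sum>i<N. (norm (q i))\<^sup>2) - real N * (norm m)\<^sup>2"
    unfolding sm by (simp add: power2_norm_eq_inner)
  finally show ?thesis by (simp add: m_def[symmetric])
qed

locale fed =
  fixes gF :: "nat \<Rightarrow> 'a::euclidean_space \<Rightarrow> 'b \<Rightarrow> 'a"
    and f :: "nat \<Rightarrow> 'a \<Rightarrow> real" and gradf :: "nat \<Rightarrow> 'a \<Rightarrow> 'a" and h :: "'a \<Rightarrow> real"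
    and N K B :: nat and L \<rho> \<mu> Bh \<alpha> \<beta> \<phi>star :: real
  assumes N_pos: "N > 0" and K_pos: "K > 0" and B_pos: "B > 0"
    and L_pos: "L > 0"
    and smooth: "\<forall>i<N. \<forall>x y. f i x - f i y - inner (gradf i y) (x - y) \<le> L / 2 * (norm (x - y))\<^sup>2
                         \<and> norm (gradf i x - gradf i y) \<le> L * norm (x - y)"
    and rho_nonneg: "\<rho> \<ge> 0"
    and weakly_convex: "convex_on UNIV (\<lambda>x. h x + \<rho> / 2 * (norm x)\<^sup>2)"
    and subgrad_bdd: "\<forall>x. \<forall>v\<in>subdiff h x. (norm v)\<^sup>2 \<le> Bh"
    and mu_pos: "\<mu> > 0"
    and alpha_pos: "\<alpha> > 0" and beta_pos: "\<beta> > 0"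
    and step_alpha: "\<alpha> * (\<rho> + L) + 4 * \<alpha>\<^sup>2 * L\<^sup>2 \<le> 1 / 2"
    and step_beta: "12 * (6 + 1 / (1 - \<alpha> * \<rho>)\<^sup>2) * \<beta>\<^sup>2 * (real K)\<^sup>2 * L\<^sup>2 \<le> min (1 / 16) (1 - \<alpha> * \<mu> / 4)"
    and PL: "\<forall>x. (norm (Gmap \<alpha> h x ((1 / real N) *\<^sub>R (\<Sum>i<N. gradf i x))))\<^sup>2
                 \<ge> 2 * \<mu> * ((1 / real N) * (\<Sum>i<N. f i x) + h x - \<phi>star)"
    and phistar_le: "\<forall>x. \<phi>star \<le> (1 / real N) * (\<Sum>i<N. f i x) + h x"
begin

definition "gbar x = (1 / real N) *\<^sub>R (\<Sum>i<N. gradf i x)"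
definition "phi x = (1 / real N) * (\<Sum>i<N. f i x) + h x"
definition "dl = 1 / (1 - \<alpha> * \<rho>)\<^sup>2"
definition "r2 = (\<beta> * real K * L)\<^sup>2"
definition "den = 1 - (5/2) * r2"
definition "Qc = (5 + dl) / 2"

definition "xk s c z i k = xhat gF B \<beta> i (s i) (c i) z k"
definition "gb s c z i k = (1 / real B) *\<^sub>R (\<Sum>b<B. gF i (xk s c z i k) (s i k b))"
definition "nz s c z i k = gb s c z i k - gradf i (xk s c z i k)"
definition "Dl s c z i = Delta gF K B \<beta> i (s i) (c i) z"
definition "Dbar s c z = (1 / real N) *\<^sub>R (\<Sum>i<N. Dl s c z i)"
definition "rz s c z = prox \<alpha> h (z - \<alpha> *\<^sub>R Dbar s c z)"
definition "rc s c z = (\<lambda>i. c i + Dbar s c z - Dl s c z i)"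
definition "Err z c = (1 / real N) * (\<Sum>i<N. (norm (gradf i z + c i - gbar z))\<^sup>2)"
definition "Phi z c = phi z - \<phi>star + \<alpha> * Err z c"
definition "nsq s c z = (1 / real N) * (\<Sum>i<N. (norm ((1 / real K) *\<^sub>R (\<Sum>k<K. nz s c z i k)))\<^sup>2)"
definition "zsq s c z = (1 / real N) * (\<Sum>i<N. (1 / real K) * (\<Sum>k<K. (norm (nz s c z i k))\<^sup>2))"

lemma xk_Suc: "xk s c z i (Suc k) = xk s c z i k - \<beta> *\<^sub>R (gb s c z i k + c i)"
  by (simp add: xk_def gb_def Let_def)

lemma xk_0: "xk s c z i 0 = z" by (simp add: xk_def)

lemma xk_sum: "z - xk s c z i k = \<beta> *\<^sub>R (\<Sum>j<k. gb s c z i j + c i)"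
  by (induction k) (simp_all add: xk_0 xk_Suc algebra_simps)

definition "vv s c z i = (1 / real K) *\<^sub>R (\<Sum>k<K. gb s c z i k)"

lemma Dl_eq: "Dl s c z i = vv s c z i + c i"
proof -
  have e: "z - xhat gF B \<beta> i (s i) (c i) z K = \<beta> *\<^sub>R (\<Sum>j<K. gb s c z i j + c i)"
    using xk_sum[where k=K] by (simp add: xk_def)
  have "Dl s c z i = (1 / (\<beta> * real K)) *\<^sub>R (\<beta> *\<^sub>R (\<Sum>j<K. gb s c z i j + c i))"
    unfolding Dl_def Delta_def e by simp
  also have "\<dots> = (1 / real K) *\<^sub>R (\<Sum>j<K. gb s c z i j) + c i"
    using beta_pos K_pos by (simp add: sum.distrib scaleR_add_right sum_constant_scaleR)
  finally show ?thesis by (simp add: vv_def)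
qed

lemma Dbar_eq: assumes "(\<Sum>i<N. c i) = 0"
  shows "Dbar s c z = (1 / real N) *\<^sub>R (\<Sum>i<N. vv s c z i)"
  unfolding Dbar_def Dl_eq using assms by (simp add: sum.distrib)

lemma rc_eq: "rc s c z i = Dbar s c z - vv s c z i"
  by (simp add: rc_def Dl_eq)

lemma rc_sum: assumes "(\<Sum>i<N. c i) = 0" shows "(\<Sum>i<N. rc s c z i) = 0"
proof -
  have "(\<Sum>i<N. rc s c z i) = real N *\<^sub>R Dbar s c z - (\<Sum>i<N. vv s c z i)"
    by (simp add: rc_eq sum_subtractf sum_constant_scaleR)
  also have "\<dots> = 0" using Dbar_eq[OF assms] N_pos by simp
  finally show ?thesis .
qed

lemma ar: "\<alpha> * \<rho> < 1 / 2" "\<alpha> * \<rho> < 1" "\<alpha> * (\<rho> + L) < 1 / 2"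
proof -
  have "4 * \<alpha>\<^sup>2 * L\<^sup>2 > 0" using alpha_pos L_pos by simp
  then have a: "\<alpha> * (\<rho> + L) < 1 / 2" using step_alpha by linarith
  moreover have "\<alpha> * L > 0" using alpha_pos L_pos by simp
  ultimately show "\<alpha> * \<rho> < 1 / 2" "\<alpha> * \<rho> < 1" "\<alpha> * (\<rho> + L) < 1 / 2"
    by (simp_all add: algebra_simps)
qed

lemma dl_bounds: "dl \<ge> 1" "dl \<le> 4"
proof -
  have a0: "\<alpha> * \<rho> \<ge> 0" using alpha_pos rho_nonneg by simp
  have p: "1 - \<alpha> * \<rho> > 1/2" "1 - \<alpha> * \<rho> \<le> 1" using ar a0 by auto
  have "(1 - \<alpha> * \<rho>)\<^sup>2 \<le> 1" using p a0 by (simp add: power_le_one)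
  moreover have "(1 - \<alpha> * \<rho>)\<^sup>2 > 0" using p by simp
  ultimately show "dl \<ge> 1" by (simp add: dl_def)
  have "(1/2)\<^sup>2 \<le> (1 - \<alpha> * \<rho>)\<^sup>2" using p by (intro power_mono) auto
  then have "(1 - \<alpha> * \<rho>)\<^sup>2 \<ge> 1/4" by (simp add: power2_eq_square)
  then show "dl \<le> 4" by (simp add: dl_def divide_le_eq)
qed

lemma r2_bounds: "12 * (6 + dl) * r2 \<le> 1 / 16" "12 * (6 + dl) * r2 \<le> 1 - \<alpha> * \<mu> / 4" "r2 \<ge> 0"
proof -
  have e: "12 * (6 + dl) * r2 = 12 * (6 + 1 / (1 - \<alpha> * \<rho>)\<^sup>2) * \<beta>\<^sup>2 * (real K)\<^sup>2 * L\<^sup>2"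
    by (simp add: dl_def r2_def power_mult_distrib)
  show "12 * (6 + dl) * r2 \<le> 1 / 16" "12 * (6 + dl) * r2 \<le> 1 - \<alpha> * \<mu> / 4"
    using step_beta unfolding e by auto
  show "r2 \<ge> 0" by (simp add: r2_def)
qed

lemma den_pos: "den \<ge> 1 - 5 / 2304" "den > 0"
proof -
  have "12 * 6 * r2 \<le> 12 * (6 + dl) * r2" using dl_bounds r2_bounds by (intro mult_right_mono) auto
  then have "r2 \<le> 1 / 1152" using r2_bounds by simp
  then show "den \<ge> 1 - 5 / 2304" "den > 0" by (simp_all add: den_def)
qed

lemma Qr_bound: "Qc * r2 / den \<le> 1 / 400"
proof -
  have "(5 + dl) * r2 \<le> (9 / 10) * (6 + dl) * r2"
    using dl_bounds r2_bounds by (intro mult_right_mono) auto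
  also have "\<dots> \<le> (9 / 10) * (1 / 192)"
  proof -
    have "(6 + dl) * r2 * 192 = 16 * (12 * (6 + dl) * r2)" by (simp add: algebra_simps)
    then have a: "(6 + dl) * r2 \<le> 1 / 192" using r2_bounds(1) by linarith
    have "(9 / 10) * (6 + dl) * r2 = (9 / 10) * ((6 + dl) * r2)" by simp
    also have "\<dots> \<le> (9 / 10) * (1 / 192)" using a by (intro mult_left_mono) auto
    finally show ?thesis .
  qed
  finally have q1: "(5 + dl) * r2 \<le> 9 / 1920" by simp
  have "Qc * r2 = ((5 + dl) * r2) / 2" by (simp add: Qc_def)
  then have "Qc * r2 \<le> 9 / 3840" using q1 by linarith
  also have "9 / 3840 \<le> (1 - 5 / 2304) / (400::real)" by simp
  also have "\<dots> \<le> den / 400" using den_pos by simp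
  finally show ?thesis using den_pos by (simp add: divide_le_eq)
qed

lemma Q_le: "Qc \<le> 9 / 2" "Qc \<ge> 3" using dl_bounds by (simp_all add: Qc_def)

lemma gradf_lip: "i < N \<Longrightarrow> norm (gradf i x - gradf i y) \<le> L * norm (x - y)"
  using smooth by blast

lemma fbar_smooth: "(1 / real N) * (\<Sum>i<N. f i x) \<le> (1 / real N) * (\<Sum>i<N. f i y) + inner (gbar y) (x - y) + L / 2 * (norm (x - y))\<^sup>2"
proof -
  have "(\<Sum>i<N. f i x) \<le> (\<Sum>i<N. f i y + inner (gradf i y) (x - y) + L / 2 * (norm (x - y))\<^sup>2)"
  proof (rule sum_mono)
    fix i assume "i \<in> {..<N}"
    then have "f i x - f i y - inner (gradf i y) (x - y) \<le> L / 2 * (norm (x - y))\<^sup>2" using smooth by blast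
    then show "f i x \<le> f i y + inner (gradf i y) (x - y) + L / 2 * (norm (x - y))\<^sup>2" by simp
  qed
  also have "\<dots> = (\<Sum>i<N. f i y) + inner (\<Sum>i<N. gradf i y) (x - y) + real N * (L / 2 * (norm (x - y))\<^sup>2)"
    by (simp add: sum.distrib inner_sum_left)
  finally have "(1 / real N) * (\<Sum>i<N. f i x) \<le> (1 / real N) * ((\<Sum>i<N. f i y) + inner (\<Sum>i<N. gradf i y) (x - y) + real N * (L / 2 * (norm (x - y))\<^sup>2))"
    using N_pos by (intro mult_left_mono) auto
  also have "\<dots> = (1 / real N) * (\<Sum>i<N. f i y) + inner (gbar y) (x - y) + L / 2 * (norm (x - y))\<^sup>2"
    using N_pos by (simp add: gbar_def field_simps)
  finally show ?thesis .
qed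

lemma descent:
  fixes z u :: 'a
  defines "z' \<equiv> prox \<alpha> h (z - \<alpha> *\<^sub>R u)"
  shows "phi z' \<le> phi z - (1 / (2 * \<alpha>) - (\<rho> + L) / 2) * (norm (z' - z))\<^sup>2 + \<alpha> / 2 * (norm (u - gbar z))\<^sup>2"
proof -
  define d where "d = z' - z"
  have sd: "(1 / \<alpha>) *\<^sub>R ((z - \<alpha> *\<^sub>R u) - z') \<in> subdiff h z'"
    unfolding z'_def by (rule prox_subdiff[OF weakly_convex rho_nonneg alpha_pos ar(2)])
  have hz: "h z \<ge> h z' + inner ((1 / \<alpha>) *\<^sub>R ((z - \<alpha> *\<^sub>R u) - z')) (z - z') - \<rho> / 2 * (norm (z - z'))\<^sup>2"
    by (rule wc_subgrad[OF weakly_convex rho_nonneg sd])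
  have w1: "(z - \<alpha> *\<^sub>R u) - z' = -(d + \<alpha> *\<^sub>R u)" "z - z' = - d" by (simp_all add: d_def algebra_simps)
  have "inner ((1 / \<alpha>) *\<^sub>R ((z - \<alpha> *\<^sub>R u) - z')) (z - z') = (1 / \<alpha>) * inner (d + \<alpha> *\<^sub>R u) d"
    unfolding w1 by (simp add: algebra_simps inner_diff_left inner_add_left)
  also have "\<dots> = (1 / \<alpha>) * ((norm d)\<^sup>2 + \<alpha> * inner u d)"
    by (simp add: inner_add_left power2_norm_eq_inner)
  also have "\<dots> = (norm d)\<^sup>2 / \<alpha> + inner u d" using alpha_pos by (simp add: field_simps)
  finally have i1: "inner ((1 / \<alpha>) *\<^sub>R ((z - \<alpha> *\<^sub>R u) - z')) (z - z') = (norm d)\<^sup>2 / \<alpha> + inner u d" .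
  have n1: "(norm (z - z'))\<^sup>2 = (norm d)\<^sup>2" by (simp add: d_def norm_minus_commute)
  have fs: "(1 / real N) * (\<Sum>i<N. f i z') \<le> (1 / real N) * (\<Sum>i<N. f i z) + inner (gbar z) d + L / 2 * (norm d)\<^sup>2"
    using fbar_smooth[of z' z] by (simp add: d_def)
  have cs: "inner (gbar z - u) d \<le> \<alpha> / 2 * (norm (u - gbar z))\<^sup>2 + (norm d)\<^sup>2 / (2 * \<alpha>)"
  proof -
    have "inner (gbar z - u) d \<le> norm (gbar z - u) * norm d" by (rule norm_cauchy_schwarz)
    also have "\<dots> \<le> \<alpha> / 2 * (norm (u - gbar z))\<^sup>2 + (norm d)\<^sup>2 / (2 * \<alpha>)"
    proof -
      have "0 \<le> (sqrt \<alpha> * norm (u - gbar z) - norm d / sqrt \<alpha>)\<^sup>2" by simp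
      also have "\<dots> = (sqrt \<alpha>)\<^sup>2 * (norm (u - gbar z))\<^sup>2 - 2 * (sqrt \<alpha> * norm (u - gbar z)) * (norm d / sqrt \<alpha>) + (norm d)\<^sup>2 / (sqrt \<alpha>)\<^sup>2"
        by (simp add: power2_diff power_mult_distrib power_divide)
      also have "\<dots> = \<alpha> * (norm (u - gbar z))\<^sup>2 - 2 * (norm (u - gbar z) * norm d) + (norm d)\<^sup>2 / \<alpha>"
        using alpha_pos by simp
      finally have "2 * (norm (u - gbar z) * norm d) \<le> \<alpha> * (norm (u - gbar z))\<^sup>2 + (norm d)\<^sup>2 / \<alpha>" by simp
      then show ?thesis by (simp add: norm_minus_commute field_simps)
    qed
    finally show ?thesis .
  qed
  have e3: "inner (gbar z - u) d = inner (gbar z) d - inner u d" by (simp add: inner_diff_left)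
  have e4: "(1 / (2 * \<alpha>) - (\<rho> + L) / 2) * (norm d)\<^sup>2 = (norm d)\<^sup>2 / (2 * \<alpha>) - \<rho> / 2 * (norm d)\<^sup>2 - L / 2 * (norm d)\<^sup>2"
    by (simp add: field_simps)
  have e5: "(norm d)\<^sup>2 / (2 * \<alpha>) + (norm d)\<^sup>2 / (2 * \<alpha>) = (norm d)\<^sup>2 / \<alpha>" by (simp add: field_simps)
  show ?thesis unfolding phi_def d_def[symmetric]
    using hz[unfolded n1] i1 fs cs e3 e4 e5 by argo
qed

definition "ww s c z i = vv s c z i - gradf i z"
definition "nn s c z i = (1 / real K) *\<^sub>R (\<Sum>k<K. nz s c z i k)"
definition "dd s c z i = (1 / real K) *\<^sub>R (\<Sum>k<K. gradf i (xk s c z i k) - gradf i z)"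
definition "WW s c z = (1 / real N) * (\<Sum>i<N. (norm (ww s c z i))\<^sup>2)"

lemma ww_eq: "ww s c z i = nn s c z i + dd s c z i"
proof -
  have "vv s c z i = (1 / real K) *\<^sub>R (\<Sum>k<K. nz s c z i k + gradf i (xk s c z i k))"
    by (simp add: vv_def nz_def)
  also have "\<dots> = nn s c z i + dd s c z i + gradf i z"
    using K_pos by (simp add: nn_def dd_def sum.distrib sum_subtractf sum_constant_scaleR algebra_simps scaleR_diff_right)
  finally show ?thesis by (simp add: ww_def)
qed

lemma u_minus_g: assumes "(\<Sum>i<N. c i) = 0"
  shows "Dbar s c z - gbar z = (1 / real N) *\<^sub>R (\<Sum>i<N. ww s c z i)"
  unfolding Dbar_eq[OF assms] gbar_def ww_def by (simp add: sum_subtractf scaleR_diff_right)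

lemma e_le_W: assumes "(\<Sum>i<N. c i) = 0"
  shows "(norm (Dbar s c z - gbar z))\<^sup>2 \<le> WW s c z"
  unfolding u_minus_g[OF assms] WW_def by (rule jensen_avg[OF N_pos])

lemma err_next: assumes "(\<Sum>i<N. c i) = 0"
  shows "Err (rz s c z) (rc s c z) \<le> 2 * L\<^sup>2 * (norm (rz s c z - z))\<^sup>2 + 2 * WW s c z"
proof -
  define z' where "z' = rz s c z"
  define q where "q i = gradf i z' - vv s c z i" for i
  have avgq: "(1 / real N) *\<^sub>R (\<Sum>j<N. q j) = gbar z' - Dbar s c z"
    unfolding q_def Dbar_eq[OF assms] gbar_def by (simp add: sum_subtractf scaleR_diff_right)
  have "Err z' (rc s c z) = (1 / real N) * (\<Sum>i<N. (norm (q i - (1 / real N) *\<^sub>R (\<Sum>j<N. q j)))\<^sup>2)"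
    unfolding Err_def avgq by (simp add: rc_eq q_def algebra_simps)
  also have "\<dots> \<le> (1 / real N) * (\<Sum>i<N. (norm (q i))\<^sup>2)" by (rule variance_le[OF N_pos])
  also have "\<dots> \<le> (1 / real N) * (\<Sum>i<N. 2 * L\<^sup>2 * (norm (z' - z))\<^sup>2 + 2 * (norm (ww s c z i))\<^sup>2)"
  proof (intro mult_left_mono sum_mono)
    fix i assume i: "i \<in> {..<N}"
    have "q i = (gradf i z' - gradf i z) + (- ww s c z i)" by (simp add: q_def ww_def)
    then have "(norm (q i))\<^sup>2 \<le> (1 + 1) * (norm (gradf i z' - gradf i z))\<^sup>2 + (1 + 1/1) * (norm (- ww s c z i))\<^sup>2"
      using young_nsq[of 1 "gradf i z' - gradf i z" "- ww s c z i"] by simp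
    moreover have "(norm (gradf i z' - gradf i z))\<^sup>2 \<le> (L * norm (z' - z))\<^sup>2"
      using gradf_lip[of i z' z] i by (intro power_mono) auto
    ultimately show "(norm (q i))\<^sup>2 \<le> 2 * L\<^sup>2 * (norm (z' - z))\<^sup>2 + 2 * (norm (ww s c z i))\<^sup>2"
      by (simp add: power_mult_distrib)
  qed simp
  also have "\<dots> = 2 * L\<^sup>2 * (norm (z' - z))\<^sup>2 + 2 * WW s c z"
    using N_pos by (simp add: sum.distrib WW_def sum_distrib_left[symmetric] field_simps)
  finally show ?thesis by (simp add: z'_def)
qed

lemma W_split: "WW s c z \<le> (5/4) * nsq s c z + 5 * ((1 / real N) * (\<Sum>i<N. (norm (dd s c z i))\<^sup>2))"
proof -
  have "(\<Sum>i<N. (norm (ww s c z i))\<^sup>2) \<le> (\<Sum>i<N. (1 + 1/4) * (norm (nn s c z i))\<^sup>2 + (1 + 1 / (1/4)) * (norm (dd s c z i))\<^sup>2)"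
    unfolding ww_eq by (intro sum_mono young_nsq) simp
  also have "\<dots> = (5/4) * (\<Sum>i<N. (norm (nn s c z i))\<^sup>2) + 5 * (\<Sum>i<N. (norm (dd s c z i))\<^sup>2)"
    by (simp add: sum.distrib sum_distrib_left)
  finally show ?thesis
    using N_pos unfolding WW_def nsq_def nn_def[symmetric]
    by (simp add: field_simps divide_right_mono)
qed

lemma drift_i: assumes i: "i < N"
  shows "den * (norm (dd s c z i))\<^sup>2 \<le> (5/3) * r2 * (norm (gradf i z + c i))\<^sup>2
     + (5/4) * r2 * ((1 / real K) * (\<Sum>k<K. (norm (nz s c z i k))\<^sup>2))"
proof -
  define x where "x k = xk s c z i k" for k
  define H where "H k = gradf i (x k) - gradf i z" for k
  have x0: "x 0 = z" by (simp add: x_def xk_0)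
  have st: "x (Suc k) = x k - \<beta> *\<^sub>R ((gradf i z + c i) + H k + nz s c z i k)" for k
    by (simp add: x_def H_def xk_Suc nz_def algebra_simps)
  have HL: "norm (H k) \<le> L * norm (x k - z)" for k
    using gradf_lip[OF i] by (simp add: H_def)
  have db: "(1 - (5/2) * (\<beta> * real K * L)\<^sup>2) * (\<Sum>k<K. (norm (x k - z))\<^sup>2)
     \<le> (5/3) * \<beta>\<^sup>2 * (real K)^3 * (norm (gradf i z + c i))\<^sup>2 + (5/4) * \<beta>\<^sup>2 * (real K)\<^sup>2 * (\<Sum>j<K. (norm (nz s c z i j))\<^sup>2)"
    by (rule drift_bound[OF x0 st HL]) (use L_pos in simp)
  have dd1: "(norm (dd s c z i))\<^sup>2 \<le> (1 / real K) * (\<Sum>k<K. (norm (H k))\<^sup>2)"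
    unfolding dd_def H_def x_def by (rule jensen_avg[OF K_pos])
  have "(\<Sum>k<K. (norm (H k))\<^sup>2) \<le> (\<Sum>k<K. L\<^sup>2 * (norm (x k - z))\<^sup>2)"
    by (intro sum_mono) (use power_mono[OF HL] in \<open>simp add: power_mult_distrib\<close>)
  then have dd2: "(norm (dd s c z i))\<^sup>2 \<le> L\<^sup>2 / real K * (\<Sum>k<K. (norm (x k - z))\<^sup>2)"
    using dd1 K_pos by (simp add: sum_distrib_left[symmetric] field_simps divide_right_mono)
  have "den * (norm (dd s c z i))\<^sup>2 \<le> L\<^sup>2 / real K * ((1 - (5/2) * (\<beta> * real K * L)\<^sup>2) * (\<Sum>k<K. (norm (x k - z))\<^sup>2))"
    using mult_left_mono[OF dd2, of den] den_pos by (simp add: den_def r2_def mult_ac)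
  also have "\<dots> \<le> L\<^sup>2 / real K * ((5/3) * \<beta>\<^sup>2 * (real K)^3 * (norm (gradf i z + c i))\<^sup>2 + (5/4) * \<beta>\<^sup>2 * (real K)\<^sup>2 * (\<Sum>j<K. (norm (nz s c z i j))\<^sup>2))"
    using db by (intro mult_left_mono) auto
  also have "\<dots> = (5/3) * r2 * (norm (gradf i z + c i))\<^sup>2 + (5/4) * r2 * ((1 / real K) * (\<Sum>k<K. (norm (nz s c z i k))\<^sup>2))"
    using K_pos by (simp add: r2_def power_mult_distrib field_simps power3_eq_cube power2_eq_square)
  finally show ?thesis .
qed

lemma a_avg: assumes "(\<Sum>i<N. c i) = 0"
  shows "(1 / real N) * (\<Sum>i<N. (norm (gradf i z + c i))\<^sup>2) = Err z c + (norm (gbar z))\<^sup>2"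
proof -
  have m: "(1 / real N) *\<^sub>R (\<Sum>j<N. gradf j z + c j) = gbar z"
    using assms by (simp add: gbar_def sum.distrib)
  show ?thesis
    using variance_eq[OF N_pos, of "\<lambda>i. gradf i z + c i"] N_pos unfolding m Err_def
    by (simp add: field_simps)
qed

lemma G_bounds:
  fixes z u :: 'a
  defines "G \<equiv> Gmap \<alpha> h z (gbar z)"
  shows "(norm (gbar z))\<^sup>2 \<le> (3/2) * (norm G)\<^sup>2 + 3 * Bh"
    and "\<alpha>\<^sup>2 * (norm G)\<^sup>2 \<le> (3/2) * (norm (prox \<alpha> h (z - \<alpha> *\<^sub>R u) - z))\<^sup>2 + 3 * dl * \<alpha>\<^sup>2 * (norm (u - gbar z))\<^sup>2"
proof -
  define p where "p = prox \<alpha> h (z - \<alpha> *\<^sub>R gbar z)"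
  have Gp: "G = (1 / \<alpha>) *\<^sub>R (z - p)" by (simp add: G_def Gmap_def p_def)
  have sd: "(1 / \<alpha>) *\<^sub>R ((z - \<alpha> *\<^sub>R gbar z) - p) \<in> subdiff h p"
    unfolding p_def by (rule prox_subdiff[OF weakly_convex rho_nonneg alpha_pos ar(2)])
  have "(1 / \<alpha>) *\<^sub>R ((z - \<alpha> *\<^sub>R gbar z) - p) = G - gbar z"
    using alpha_pos by (simp add: Gp algebra_simps)
  with sd subgrad_bdd have hb: "(norm (G - gbar z))\<^sup>2 \<le> Bh" by auto
  have "gbar z = G + (- (G - gbar z))" by simp
  then have "(norm (gbar z))\<^sup>2 \<le> (1 + 1/2) * (norm G)\<^sup>2 + (1 + 1 / (1/2)) * (norm (- (G - gbar z)))\<^sup>2"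
    by (metis young_nsq zero_less_divide_1_iff zero_less_numeral)
  then show "(norm (gbar z))\<^sup>2 \<le> (3/2) * (norm G)\<^sup>2 + 3 * Bh" using hb by (simp add: norm_minus_commute)
  define z' where "z' = prox \<alpha> h (z - \<alpha> *\<^sub>R u)"
  have lip: "(1 - \<alpha> * \<rho>) * norm (z' - p) \<le> norm ((z - \<alpha> *\<^sub>R u) - (z - \<alpha> *\<^sub>R gbar z))"
    unfolding z'_def p_def by (rule prox_lip[OF weakly_convex rho_nonneg alpha_pos ar(2)])
  have "norm ((z - \<alpha> *\<^sub>R u) - (z - \<alpha> *\<^sub>R gbar z)) = \<alpha> * norm (u - gbar z)"
    using alpha_pos by (simp add: norm_minus_commute scaleR_diff_right[symmetric])
  with lip have lip2: "(1 - \<alpha> * \<rho>) * norm (z' - p) \<le> \<alpha> * norm (u - gbar z)" by simp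
  have pos: "1 - \<alpha> * \<rho> > 0" using ar by simp
  have "((1 - \<alpha> * \<rho>) * norm (z' - p))\<^sup>2 \<le> (\<alpha> * norm (u - gbar z))\<^sup>2"
    using lip2 pos by (intro power_mono) auto
  then have q: "(1 - \<alpha> * \<rho>)\<^sup>2 * (norm (z' - p))\<^sup>2 \<le> \<alpha>\<^sup>2 * (norm (u - gbar z))\<^sup>2"
    by (metis power_mult_distrib)
  have "(norm (z' - p))\<^sup>2 = dl * ((1 - \<alpha> * \<rho>)\<^sup>2 * (norm (z' - p))\<^sup>2)"
    using pos by (simp add: dl_def)
  also have "\<dots> \<le> dl * (\<alpha>\<^sup>2 * (norm (u - gbar z))\<^sup>2)"
    using q dl_bounds by (intro mult_left_mono) auto
  finally have zp: "(norm (z' - p))\<^sup>2 \<le> dl * \<alpha>\<^sup>2 * (norm (u - gbar z))\<^sup>2" by (simp add: mult.assoc)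
  have "\<alpha>\<^sup>2 * (norm G)\<^sup>2 = (norm (z - p))\<^sup>2"
    using alpha_pos by (simp add: Gp power_mult_distrib power_divide)
  also have "z - p = (- (z' - z)) + (z' - p)" by simp
  also have "(norm ((- (z' - z)) + (z' - p)))\<^sup>2 \<le> (1 + 1/2) * (norm (- (z' - z)))\<^sup>2 + (1 + 1/(1/2)) * (norm (z' - p))\<^sup>2"
    by (metis young_nsq zero_less_divide_1_iff zero_less_numeral)
  finally show "\<alpha>\<^sup>2 * (norm G)\<^sup>2 \<le> (3/2) * (norm (prox \<alpha> h (z - \<alpha> *\<^sub>R u) - z))\<^sup>2 + 3 * dl * \<alpha>\<^sup>2 * (norm (u - gbar z))\<^sup>2"
    using zp by (simp add: z'_def norm_minus_commute)
qed

definition "kk = Qc * r2 / den"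

lemma kk_bounds: "kk \<ge> 0" "kk \<le> 1 / 400" "(25/3) * kk \<le> 1 - \<alpha> * \<mu> / 4"
proof -
  show "kk \<ge> 0" using den_pos r2_bounds Q_le by (simp add: kk_def)
  show "kk \<le> 1 / 400" using Qr_bound by (simp add: kk_def)
  have "(25/3) * Qc / den \<le> 12 * (6 + dl)"
  proof -
    have "(25/3) * Qc \<le> 12 * (6 + dl) * (1 - 5 / 2304)" using dl_bounds by (simp add: Qc_def)
    also have "\<dots> \<le> 12 * (6 + dl) * den" using den_pos dl_bounds by (intro mult_left_mono) auto
    finally show ?thesis using den_pos by (simp add: divide_le_eq mult.commute)
  qed
  then have "(25/3) * Qc / den * r2 \<le> 12 * (6 + dl) * r2" using r2_bounds by (intro mult_right_mono) auto
  also have "\<dots> \<le> 1 - \<alpha> * \<mu> / 4" by (rule r2_bounds(2))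
  finally show "(25/3) * kk \<le> 1 - \<alpha> * \<mu> / 4" by (simp add: kk_def)
qed

theorem round_ineq:
  assumes c0: "(\<Sum>i<N. c i) = 0"
  shows "Phi (rz s c z) (rc s c z) \<le> (1 - \<alpha> * \<mu> / 4) * Phi z c
     + \<alpha> * ((5/4) * Qc * nsq s c z + (25/4) * kk * zsq s c z + 25 * kk * Bh)"
proof -
  define z' where "z' = rz s c z"
  define u where "u = Dbar s c z"
  define P where "P = phi z - \<phi>star"
  define P' where "P' = phi z' - \<phi>star"
  define E where "E = Err z c"
  define E' where "E' = Err z' (rc s c z)"
  define D2 where "D2 = (norm (z' - z))\<^sup>2"
  define e2 where "e2 = (norm (u - gbar z))\<^sup>2"
  define W where "W = WW s c z"
  define Gs where "Gs = (norm (Gmap \<alpha> h z (gbar z)))\<^sup>2"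
  define Dd where "Dd = (1 / real N) * (\<Sum>i<N. (norm (dd s c z i))\<^sup>2)"
  define A where "A = (1 / real N) * (\<Sum>i<N. (norm (gradf i z + c i))\<^sup>2)"
  define g2 where "g2 = (norm (gbar z))\<^sup>2"
  define nq where "nq = nsq s c z"
  define zq where "zq = zsq s c z"
  define c1 where "c1 = 1 / (2 * \<alpha>) - (\<rho> + L) / 2"
  have al: "\<alpha> > 0" by (rule alpha_pos)
  have nonneg: "D2 \<ge> 0" "e2 \<ge> 0" "W \<ge> 0" "Gs \<ge> 0" "Dd \<ge> 0" "nq \<ge> 0" "zq \<ge> 0" "E \<ge> 0" "P \<ge> 0"
    using phistar_le by (simp_all add: D2_def e2_def W_def WW_def Gs_def Dd_def nq_def nsq_def zq_def zsq_def
        E_def Err_def P_def phi_def sum_nonneg)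
  have T1: "P' \<le> P - c1 * D2 + \<alpha> / 2 * e2"
    using descent[of z u] unfolding P'_def P_def c1_def D2_def e2_def z'_def rz_def u_def by simp
  have T2: "E' \<le> 2 * L\<^sup>2 * D2 + 2 * W"
    using err_next[OF c0] unfolding E'_def D2_def W_def z'_def by simp
  have F3: "e2 \<le> W" using e_le_W[OF c0] by (simp add: e2_def W_def u_def)
  have F4: "W \<le> (5/4) * nq + 5 * Dd" using W_split by (simp add: W_def nq_def Dd_def)
  have F5: "den * Dd \<le> (5/3) * r2 * A + (5/4) * r2 * zq"
  proof -
    have "den * Dd = (1 / real N) * (\<Sum>i<N. den * (norm (dd s c z i))\<^sup>2)"
      by (simp add: Dd_def sum_distrib_left)
    also have "\<dots> \<le> (1 / real N) * (\<Sum>i<N. (5/3) * r2 * (norm (gradf i z + c i))\<^sup>2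
        + (5/4) * r2 * ((1 / real K) * (\<Sum>k<K. (norm (nz s c z i k))\<^sup>2)))"
      using drift_i by (intro mult_left_mono sum_mono) auto
    also have "(\<Sum>i<N. (5/3) * r2 * (norm (gradf i z + c i))\<^sup>2
        + (5/4) * r2 * ((1 / real K) * (\<Sum>k<K. (norm (nz s c z i k))\<^sup>2)))
       = (5/3) * r2 * (\<Sum>i<N. (norm (gradf i z + c i))\<^sup>2) + (5/4) * r2 * (\<Sum>i<N. (1 / real K) * (\<Sum>k<K. (norm (nz s c z i k))\<^sup>2))"
      by (simp add: sum.distrib sum_distrib_left)
    also have "(1 / real N) * ((5/3) * r2 * (\<Sum>i<N. (norm (gradf i z + c i))\<^sup>2) + (5/4) * r2 * (\<Sum>i<N. (1 / real K) * (\<Sum>k<K. (norm (nz s c z i k))\<^sup>2)))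
       = (5/3) * r2 * A + (5/4) * r2 * zq"
      unfolding A_def zq_def zsq_def by (simp add: algebra_simps)
    finally show ?thesis .
  qed
  have F6: "A = E + g2" using a_avg[OF c0] by (simp add: A_def E_def g2_def)
  have F7: "g2 \<le> (3/2) * Gs + 3 * Bh" using G_bounds(1) by (simp add: g2_def Gs_def)
  have F8: "\<alpha>\<^sup>2 * Gs \<le> (3/2) * D2 + 3 * dl * \<alpha>\<^sup>2 * e2"
    using G_bounds(2)[of z u] by (simp add: Gs_def D2_def e2_def z'_def rz_def u_def)
  have F9: "Gs \<ge> 2 * \<mu> * P" using PL by (simp add: Gs_def P_def phi_def gbar_def)
  have S2: "c1 - 2 * \<alpha> * L\<^sup>2 \<ge> 1 / (4 * \<alpha>)"
  proof -
    have "4 * \<alpha> * (c1 - 2 * \<alpha> * L\<^sup>2) = 2 - 2 * (\<alpha> * (\<rho> + L) + 4 * \<alpha>\<^sup>2 * L\<^sup>2)"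
      using al by (simp add: c1_def field_simps power2_eq_square)
    also have "\<dots> \<ge> 1" using step_alpha by simp
    finally have "4 * \<alpha> * (c1 - 2 * \<alpha> * L\<^sup>2) \<ge> 1" .
    then show ?thesis using al by (simp add: divide_le_eq mult.commute mult.left_commute)
  qed
  have H1: "\<alpha> * E' \<le> 2 * \<alpha> * L\<^sup>2 * D2 + 2 * (\<alpha> * W)"
    using mult_left_mono[OF T2, of \<alpha>] al by (simp add: algebra_simps)
  have H2: "c1 * D2 - 2 * \<alpha> * L\<^sup>2 * D2 \<ge> D2 / (4 * \<alpha>)"
    using mult_right_mono[OF S2 nonneg(1)] by (simp add: algebra_simps)
  have H3: "\<alpha> / 6 * Gs \<le> D2 / (4 * \<alpha>) + dl * \<alpha> / 2 * e2"
  proof -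
    have "\<alpha>\<^sup>2 * Gs / (6 * \<alpha>) \<le> ((3/2) * D2 + 3 * dl * \<alpha>\<^sup>2 * e2) / (6 * \<alpha>)"
      using F8 al by (intro divide_right_mono) auto
    moreover have "\<alpha>\<^sup>2 * Gs / (6 * \<alpha>) = \<alpha> / 6 * Gs" using al by (simp add: power2_eq_square)
    moreover have "((3/2) * D2 + 3 * dl * \<alpha>\<^sup>2 * e2) / (6 * \<alpha>) = D2 / (4 * \<alpha>) + dl * \<alpha> / 2 * e2"
      using al by (simp add: field_simps power2_eq_square)
    ultimately show ?thesis by argo
  qed
  have H4: "\<alpha> * ((1 + dl) / 2 * e2) \<le> \<alpha> * ((1 + dl) / 2 * W)"
    using F3 al dl_bounds by (intro mult_left_mono) auto
  have H4e: "\<alpha> * ((1 + dl) / 2 * e2) = dl * \<alpha> / 2 * e2 + \<alpha> / 2 * e2" by (simp add: field_simps)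
  have H4w: "\<alpha> * ((1 + dl) / 2 * W) + 2 * (\<alpha> * W) = \<alpha> * (Qc * W)" by (simp add: Qc_def field_simps)
  have Phi1: "P' + \<alpha> * E' \<le> P - \<alpha> / 6 * Gs + \<alpha> * (Qc * W)"
    using T1 H1 H2 H3 H4 H4e H4w by argo
  have H5: "Qc * W \<le> (5/4) * Qc * nq + 5 * (Qc * Dd)"
    using mult_left_mono[OF F4, of Qc] Q_le by (simp add: algebra_simps)
  have H6: "Qc * Dd \<le> kk * ((5/3) * A + (5/4) * zq)"
  proof -
    have "Dd \<le> ((5/3) * r2 * A + (5/4) * r2 * zq) / den"
      using F5 den_pos by (simp add: le_divide_eq mult.commute)
    then have "Qc * Dd \<le> Qc * (((5/3) * r2 * A + (5/4) * r2 * zq) / den)"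
      using Q_le by (intro mult_left_mono) auto
    also have "\<dots> = kk * ((5/3) * A + (5/4) * zq)" by (simp add: kk_def field_simps)
    finally show ?thesis .
  qed
  have H7: "kk * A \<le> kk * (E + (3/2) * Gs + 3 * Bh)"
    using F6 F7 kk_bounds by (intro mult_left_mono) auto
  have H8: "(25/2) * (kk * Gs) \<le> (1/24) * Gs"
  proof -
    have "kk * Gs \<le> (1/400) * Gs" using kk_bounds nonneg by (intro mult_right_mono) auto
    moreover have "kk * Gs \<ge> 0" using kk_bounds nonneg by simp
    ultimately show ?thesis by linarith
  qed
  have H9: "(25/3) * kk * E \<le> (1 - \<alpha> * \<mu> / 4) * E"
    using kk_bounds nonneg by (intro mult_right_mono) auto
  define R where "R = (5/4) * Qc * nq + (25/4) * kk * zq + 25 * kk * Bh"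
  have e6: "kk * ((5/3) * A + (5/4) * zq) = (5/3) * (kk * A) + (5/4) * (kk * zq)" by (simp add: algebra_simps)
  have e7: "kk * (E + (3/2) * Gs + 3 * Bh) = kk * E + (3/2) * (kk * Gs) + 3 * (kk * Bh)" by (simp add: algebra_simps)
  have e8: "R = (5/4) * Qc * nq + (25/4) * (kk * zq) + 25 * (kk * Bh)" by (simp add: R_def)
  have e9: "(25/3) * kk * E = (25/3) * (kk * E)" by simp
  have QW: "Qc * W \<le> R + (1 - \<alpha> * \<mu> / 4) * E + (1/24) * Gs"
    using H5 H6 H7 H8 H9 e6 e7 e8 e9 by argo
  have "\<alpha> * (Qc * W) \<le> \<alpha> * (R + (1 - \<alpha> * \<mu> / 4) * E + (1/24) * Gs)"
    using QW al by (intro mult_left_mono) auto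
  then have aQW: "\<alpha> * (Qc * W) \<le> \<alpha> * R + (1 - \<alpha> * \<mu> / 4) * (\<alpha> * E) + \<alpha> / 24 * Gs"
    by (simp add: algebra_simps)
  have H10: "\<alpha> / 8 * Gs \<ge> \<alpha> * \<mu> / 4 * P"
  proof -
    have "\<alpha> / 8 * Gs \<ge> \<alpha> / 8 * (2 * \<mu> * P)" using F9 al by (intro mult_left_mono) auto
    then show ?thesis by (simp add: algebra_simps)
  qed
  have e10: "(1 - \<alpha> * \<mu> / 4) * (P + \<alpha> * E) = P - \<alpha> * \<mu> / 4 * P + (1 - \<alpha> * \<mu> / 4) * (\<alpha> * E)"
    by (simp add: algebra_simps)
  have "P' + \<alpha> * E' \<le> (1 - \<alpha> * \<mu> / 4) * (P + \<alpha> * E) + \<alpha> * R"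
    using Phi1 aQW H10 e10 by argo
  then show ?thesis
    by (simp add: Phi_def P'_def P_def E'_def E_def R_def nq_def zq_def z'_def)
qed

end



lemma key1:
  fixes e :: "'b \<Rightarrow> 'a::euclidean_space"
  assumes ps: "prob_space Dm" and em: "e \<in> borel_measurable Dm" and ei: "integrable Dm e"
    and e0: "(\<integral> s. e s \<partial>Dm) = 0"
    and ev: "(\<integral>\<^sup>+ s. ennreal ((norm (e s))\<^sup>2) \<partial>Dm) \<le> ennreal S" and S0: "S \<ge> 0"
  shows "(\<integral>\<^sup>+ s. ennreal ((norm (V + w *\<^sub>R e s))\<^sup>2) \<partial>Dm) \<le> ennreal ((norm V)\<^sup>2 + w\<^sup>2 * S)"
proof -
  interpret prob_space Dm by (rule ps)
  have i2: "integrable Dm (\<lambda>s. (norm (e s))\<^sup>2)"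
  proof (rule integrableI_bounded)
    show "(\<lambda>s. (norm (e s))\<^sup>2) \<in> borel_measurable Dm" using em by measurable
    have "(\<integral>\<^sup>+ s. ennreal (norm ((norm (e s))\<^sup>2)) \<partial>Dm) = (\<integral>\<^sup>+ s. ennreal ((norm (e s))\<^sup>2) \<partial>Dm)" by simp
    also have "\<dots> < \<infinity>" using ev by (simp add: le_less_trans)
    finally show "(\<integral>\<^sup>+ s. ennreal (norm ((norm (e s))\<^sup>2)) \<partial>Dm) < \<infinity>" .
  qed
  have eq: "(norm (V + w *\<^sub>R e s))\<^sup>2 = (norm V)\<^sup>2 + 2 * w * inner V (e s) + w\<^sup>2 * (norm (e s))\<^sup>2" for s
    by (simp add: nsq_add power_mult_distrib algebra_simps)
  have ii: "integrable Dm (\<lambda>s. (norm V)\<^sup>2 + 2 * w * inner V (e s) + w\<^sup>2 * (norm (e s))\<^sup>2)"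
  proof (intro Bochner_Integration.integrable_add)
    show "integrable Dm (\<lambda>s. (norm V)\<^sup>2)" by simp
    show "integrable Dm (\<lambda>s. 2 * w * inner V (e s))"
      using ei by (intro integrable_mult_right integrable_inner_right)
    show "integrable Dm (\<lambda>s. w\<^sup>2 * (norm (e s))\<^sup>2)"
      using i2 by (intro integrable_mult_right)
  qed
  have "(\<integral>\<^sup>+ s. ennreal ((norm (V + w *\<^sub>R e s))\<^sup>2) \<partial>Dm)
      = (\<integral>\<^sup>+ s. ennreal ((norm V)\<^sup>2 + 2 * w * inner V (e s) + w\<^sup>2 * (norm (e s))\<^sup>2) \<partial>Dm)"
    unfolding eq ..
  also have "\<dots> = ennreal (\<integral> s. (norm V)\<^sup>2 + 2 * w * inner V (e s) + w\<^sup>2 * (norm (e s))\<^sup>2 \<partial>Dm)"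
    using ii by (intro nn_integral_eq_integral) (auto simp: eq[symmetric])
  also have "(\<integral> s. (norm V)\<^sup>2 + 2 * w * inner V (e s) + w\<^sup>2 * (norm (e s))\<^sup>2 \<partial>Dm)
      = (norm V)\<^sup>2 + 2 * w * inner V (\<integral> s. e s \<partial>Dm) + w\<^sup>2 * (\<integral> s. (norm (e s))\<^sup>2 \<partial>Dm)"
    using i2 ei by (simp add: integral_add integral_mult_right_zero prob_space)
  also have "\<dots> = (norm V)\<^sup>2 + w\<^sup>2 * (\<integral> s. (norm (e s))\<^sup>2 \<partial>Dm)" using e0 by simp
  also have "(\<integral> s. (norm (e s))\<^sup>2 \<partial>Dm) \<le> S"
  proof -
    have "ennreal (\<integral> s. (norm (e s))\<^sup>2 \<partial>Dm) = (\<integral>\<^sup>+ s. ennreal ((norm (e s))\<^sup>2) \<partial>Dm)"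
      using i2 by (intro nn_integral_eq_integral[symmetric]) auto
    with ev have "ennreal (\<integral> s. (norm (e s))\<^sup>2 \<partial>Dm) \<le> ennreal S" by simp
    then show ?thesis using S0 by (simp add: ennreal_le_iff)
  qed
  then have "ennreal ((norm V)\<^sup>2 + w\<^sup>2 * (\<integral> s. (norm (e s))\<^sup>2 \<partial>Dm)) \<le> ennreal ((norm V)\<^sup>2 + w\<^sup>2 * S)"
    by (intro ennreal_leI add_left_mono mult_left_mono) auto
  finally show ?thesis .
qed

lemma core:
  fixes Mx :: "'l \<Rightarrow> 'b measure" and V X :: "('l \<Rightarrow> 'b) \<Rightarrow> 'a::euclidean_space"
    and G :: "'a \<Rightarrow> 'b \<Rightarrow> 'a"
  assumes pp: "\<And>l. prob_space (Mx l)"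
    and fin: "finite I" and l: "l \<in> I"
    and Vm: "V \<in> borel_measurable (PiM I Mx)" and Xm: "X \<in> borel_measurable (PiM I Mx)"
    and Vi: "\<And>y s. y \<in> space (PiM I Mx) \<Longrightarrow> s \<in> space (Mx l) \<Longrightarrow> V (y(l := s)) = V y"
    and Xi: "\<And>y s. y \<in> space (PiM I Mx) \<Longrightarrow> s \<in> space (Mx l) \<Longrightarrow> X (y(l := s)) = X y"
    and Gm: "(\<lambda>(x, s). G x s) \<in> borel_measurable (borel \<Otimes>\<^sub>M Mx l)"
    and key: "\<And>x v. (\<integral>\<^sup>+ s. ennreal ((norm (v + G x s))\<^sup>2) \<partial>Mx l) \<le> ennreal ((norm v)\<^sup>2 + c)"
    and c0: "c \<ge> 0"
  shows "(\<integral>\<^sup>+ y. ennreal ((norm (V y + G (X y) (y l)))\<^sup>2) \<partial>PiM I Mx)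
      \<le> (\<integral>\<^sup>+ y. ennreal ((norm (V y))\<^sup>2) \<partial>PiM I Mx) + ennreal c"
proof -
  interpret product_prob_space Mx I by (rule product_prob_spaceI[OF pp])
  define J where "J = I - {l}"
  have IJ: "I = insert l J" "l \<notin> J" "finite J" using l fin by (auto simp: J_def)
  obtain s0 where s0: "s0 \<in> space (Mx l)" using M.not_empty[of l] by blast
  have upd: "x(l := s) \<in> space (PiM I Mx)" if "x \<in> space (PiM J Mx)" "s \<in> space (Mx l)" for x s
    using that unfolding IJ(1) space_PiM by (intro PiE_fun_upd) auto
  have Vc: "V (x(l := s)) = V (x(l := s0))" if "x \<in> space (PiM J Mx)" "s \<in> space (Mx l)" for x s
    using Vi[OF upd[OF that(1) s0] that(2)] by simp
  have Xc: "X (x(l := s)) = X (x(l := s0))" if "x \<in> space (PiM J Mx)" "s \<in> space (Mx l)" for x s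
    using Xi[OF upd[OF that(1) s0] that(2)] by simp
  have Hm: "(\<lambda>y. ennreal ((norm (V y + G (X y) (y l)))\<^sup>2)) \<in> borel_measurable (PiM I Mx)"
  proof -
    have "(\<lambda>y. (X y, y l)) \<in> measurable (PiM I Mx) (borel \<Otimes>\<^sub>M Mx l)"
      using Xm l by measurable
    then have "(\<lambda>y. (\<lambda>(x, s). G x s) (X y, y l)) \<in> borel_measurable (PiM I Mx)"
      using Gm by (rule measurable_compose)
    then show ?thesis using Vm by simp
  qed
  have Vm2: "(\<lambda>y. ennreal ((norm (V y))\<^sup>2)) \<in> borel_measurable (PiM I Mx)" using Vm by measurable
  have "(\<integral>\<^sup>+ y. ennreal ((norm (V y + G (X y) (y l)))\<^sup>2) \<partial>PiM I Mx)
     = (\<integral>\<^sup>+ x. (\<integral>\<^sup>+ s. ennreal ((norm (V (x(l := s)) + G (X (x(l := s))) s))\<^sup>2) \<partial>Mx l) \<partial>PiM J Mx)"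
    using Hm unfolding IJ(1) by (subst product_nn_integral_insert) (use IJ in auto)
  also have "\<dots> \<le> (\<integral>\<^sup>+ x. ennreal ((norm (V (x(l := s0))))\<^sup>2) + ennreal c \<partial>PiM J Mx)"
  proof (rule nn_integral_mono)
    fix x assume x: "x \<in> space (PiM J Mx)"
    have "(\<integral>\<^sup>+ s. ennreal ((norm (V (x(l := s)) + G (X (x(l := s))) s))\<^sup>2) \<partial>Mx l)
        = (\<integral>\<^sup>+ s. ennreal ((norm (V (x(l := s0)) + G (X (x(l := s0))) s))\<^sup>2) \<partial>Mx l)"
      using Vc[OF x] Xc[OF x] by (intro nn_integral_cong) auto
    also have "\<dots> \<le> ennreal ((norm (V (x(l := s0))))\<^sup>2 + c)" by (rule key)
    also have "\<dots> = ennreal ((norm (V (x(l := s0))))\<^sup>2) + ennreal c" using c0 by (simp add: ennreal_plus)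
    finally show "(\<integral>\<^sup>+ s. ennreal ((norm (V (x(l := s)) + G (X (x(l := s))) s))\<^sup>2) \<partial>Mx l)
        \<le> ennreal ((norm (V (x(l := s0))))\<^sup>2) + ennreal c" .
  qed
  also have "\<dots> = (\<integral>\<^sup>+ x. ennreal ((norm (V (x(l := s0))))\<^sup>2) \<partial>PiM J Mx) + ennreal c"
  proof -
    interpret PJ: prob_space "PiM J Mx" by (rule prob_space_PiM) (use pp in auto)
    have m: "(\<lambda>x. ennreal ((norm (V (x(l := s0))))\<^sup>2)) \<in> borel_measurable (PiM J Mx)"
    proof -
      have "(\<lambda>x i. (if i = l then (\<lambda>x. s0) else (\<lambda>x. x i)) x) \<in> measurable (PiM J Mx) (PiM I Mx)"
      proof (rule measurable_PiM_single')
        fix i assume "i \<in> I"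
        then show "(\<lambda>x. (if i = l then (\<lambda>x. s0) else (\<lambda>x. x i)) x) \<in> measurable (PiM J Mx) (Mx i)"
          using s0 by (cases "i = l") (auto simp: IJ(1))
      next
        show "(\<lambda>x i. (if i = l then (\<lambda>x. s0) else (\<lambda>x. x i)) x) \<in> space (PiM J Mx) \<rightarrow> (\<Pi>\<^sub>E i\<in>I. space (Mx i))"
          using s0 IJ by (auto simp: space_PiM PiE_def extensional_def Pi_def)
      qed
      moreover have "(\<lambda>x i. (if i = l then (\<lambda>x. s0) else (\<lambda>x. x i)) x) = (\<lambda>x. x(l := s0))"
        by (auto simp: fun_eq_iff)
      ultimately have "(\<lambda>x. x(l := s0)) \<in> measurable (PiM J Mx) (PiM I Mx)" by simp
      then show ?thesis using Vm2 by (rule measurable_compose)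
    qed
    show ?thesis using m by (subst nn_integral_add) (auto simp: PJ.emeasure_space_1)
  qed
  also have "(\<integral>\<^sup>+ x. ennreal ((norm (V (x(l := s0))))\<^sup>2) \<partial>PiM J Mx)
      = (\<integral>\<^sup>+ x. (\<integral>\<^sup>+ s. ennreal ((norm (V (x(l := s))))\<^sup>2) \<partial>Mx l) \<partial>PiM J Mx)"
  proof (rule nn_integral_cong)
    fix x assume x: "x \<in> space (PiM J Mx)"
    have "(\<integral>\<^sup>+ s. ennreal ((norm (V (x(l := s))))\<^sup>2) \<partial>Mx l) = (\<integral>\<^sup>+ s. ennreal ((norm (V (x(l := s0))))\<^sup>2) \<partial>Mx l)"
      using Vc[OF x] by (intro nn_integral_cong) auto
    also have "\<dots> = ennreal ((norm (V (x(l := s0))))\<^sup>2)" by (simp add: M.emeasure_space_1)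
    finally show "ennreal ((norm (V (x(l := s0))))\<^sup>2) = (\<integral>\<^sup>+ s. ennreal ((norm (V (x(l := s))))\<^sup>2) \<partial>Mx l)" by simp
  qed
  also have "\<dots> = (\<integral>\<^sup>+ y. ennreal ((norm (V y))\<^sup>2) \<partial>PiM I Mx)"
    using Vm2 unfolding IJ(1) by (subst product_nn_integral_insert) (use IJ in auto)
  finally show ?thesis .
qed




lemma nn_avg_le:
  fixes f :: "nat \<Rightarrow> 'x \<Rightarrow> real"
  assumes n: "n > 0" and fm: "\<And>i. i < n \<Longrightarrow> f i \<in> borel_measurable M"
    and f0: "\<And>i y. f i y \<ge> 0"
    and fb: "\<And>i. i < n \<Longrightarrow> (\<integral>\<^sup>+ y. ennreal (f i y) \<partial>M) \<le> ennreal c"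
    and c0: "c \<ge> 0"
  shows "(\<integral>\<^sup>+ y. ennreal ((1 / real n) * (\<Sum>i<n. f i y)) \<partial>M) \<le> ennreal c"
proof -
  have "(\<integral>\<^sup>+ y. ennreal ((1 / real n) * (\<Sum>i<n. f i y)) \<partial>M)
      = (\<integral>\<^sup>+ y. ennreal (1 / real n) * (\<Sum>i<n. ennreal (f i y)) \<partial>M)"
  proof (intro nn_integral_cong)
    fix y
    have "ennreal ((1 / real n) * (\<Sum>i<n. f i y)) = ennreal (1 / real n) * ennreal (\<Sum>i<n. f i y)"
      using f0 by (intro ennreal_mult) (auto simp: sum_nonneg)
    also have "ennreal (\<Sum>i<n. f i y) = (\<Sum>i<n. ennreal (f i y))" using f0 by simp
    finally show "ennreal ((1 / real n) * (\<Sum>i<n. f i y)) = ennreal (1 / real n) * (\<Sum>i<n. ennreal (f i y))" .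
  qed
  also have "\<dots> = ennreal (1 / real n) * (\<Sum>i<n. (\<integral>\<^sup>+ y. ennreal (f i y) \<partial>M))"
  proof -
    have "(\<integral>\<^sup>+ y. (\<Sum>i<n. ennreal (f i y)) \<partial>M) = (\<Sum>i<n. (\<integral>\<^sup>+ y. ennreal (f i y) \<partial>M))"
      using fm by (intro nn_integral_sum) auto
    moreover have "(\<lambda>y. (\<Sum>i<n. ennreal (f i y))) \<in> borel_measurable M" using fm by measurable
    ultimately show ?thesis by (simp add: nn_integral_cmult)
  qed
  also have "\<dots> \<le> ennreal (1 / real n) * (\<Sum>i<n. ennreal c)"
    using fb by (intro mult_left_mono sum_mono) auto
  also have "(\<Sum>i<n. ennreal c) = ennreal (real n * c)" using c0 by (simp add: ennreal_mult ennreal_of_nat_eq_real_of_nat)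
  also have "ennreal (1 / real n) * ennreal (real n * c) = ennreal (1 / real n * (real n * c))"
    by (rule ennreal_mult[symmetric]) (use c0 in auto)
  also have "1 / real n * (real n * c) = c" using n by simp
  finally show ?thesis .
qed

lemma xhat_cong:
  assumes "\<forall>k'<k. \<forall>b<B. xi k' b = xi' k' b"
  shows "xhat gF B \<beta> i xi c z k = xhat gF B \<beta> i xi' c z k"
  using assms by (induction k) (simp_all add: Let_def)

locale fedp = fed gF f gradf h N K B L \<rho> \<mu> Bh \<alpha> \<beta> \<phi>star
  for gF :: "nat \<Rightarrow> 'a::euclidean_space \<Rightarrow> 'b \<Rightarrow> 'a" and f gradf h N K B L \<rho> \<mu> Bh \<alpha> \<beta> \<phi>star +
  fixes D :: "nat \<Rightarrow> 'b measure" and \<sigma> :: real and z0 :: 'a and c0 :: "nat \<Rightarrow> 'a" and T :: nat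
  assumes D_prob: "\<forall>i<N. prob_space (D i)"
    and gF_meas: "\<forall>i<N. (\<lambda>(x, s). gF i x s) \<in> borel_measurable (borel \<Otimes>\<^sub>M D i)"
    and unbiased: "\<forall>i<N. \<forall>x. integrable (D i) (gF i x) \<and> (\<integral>s. gF i x s \<partial>D i) = gradf i x"
    and variance: "\<forall>i<N. \<forall>x. (\<integral>\<^sup>+s. ennreal ((norm (gF i x s - gradf i x))\<^sup>2) \<partial>D i) \<le> ennreal (\<sigma>\<^sup>2)"
    and c0_sum: "(\<Sum>i<N. c0 i) = 0"
    and f_cont: "\<forall>i<N. continuous_on UNIV (f i)"
begin

definition "Dx l = D (if fst (snd l) < N then fst (snd l) else 0)"
definition "IT = {(t, i, k, b). t < T \<and> i < N \<and> k < K \<and> b < B}"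
definition "PP = PiM IT Dx"
definition "arr y = (\<lambda>t i k b. y (t, i, k, b))"
definition "st y t = fedcanon gF h N K B \<alpha> \<beta> z0 c0 (arr y) t"
definition "Zt t y = fst (st y t)"
definition "Ct t y = snd (st y t)"
definition "Xk t i k y = xk (arr y t) (Ct t y) (Zt t y) i k"
definition "Ge i x s = gF i x s - gradf i x"

lemma Dx_eq: "i < N \<Longrightarrow> Dx (t, i, k, b) = D i" by (simp add: Dx_def)

lemma Dx_prob: "prob_space (Dx l)" using D_prob N_pos by (simp add: Dx_def)

lemma st_Suc: "st y (Suc t) = (rz (arr y t) (Ct t y) (Zt t y), rc (arr y t) (Ct t y) (Zt t y))"
  by (simp add: st_def Zt_def Ct_def rz_def rc_def Dbar_def Dl_def Let_def)

lemma Zt_Suc: "Zt (Suc t) y = rz (arr y t) (Ct t y) (Zt t y)" by (simp add: Zt_def st_Suc)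
lemma Ct_Suc: "Ct (Suc t) y = rc (arr y t) (Ct t y) (Zt t y)" by (simp add: Ct_def st_Suc)
lemma Zt_0: "Zt 0 y = z0" by (simp add: Zt_def st_def)
lemma Ct_0: "Ct 0 y = c0" by (simp add: Ct_def st_def)

lemma Ct_sum: "(\<Sum>i<N. Ct t y i) = 0"
  by (induction t) (simp_all add: Ct_0 c0_sum Ct_Suc rc_sum)

lemma st_cong:
  assumes "\<forall>t'<t. \<forall>i<N. \<forall>k<K. \<forall>b<B. y (t', i, k, b) = y' (t', i, k, b)"
  shows "Zt t y = Zt t y' \<and> (\<forall>i<N. Ct t y i = Ct t y' i)"
  using assms
proof (induction t)
  case 0 then show ?case by (simp add: Zt_0 Ct_0)
next
  case (Suc t)
  then have IH: "Zt t y = Zt t y'" "\<And>i. i < N \<Longrightarrow> Ct t y i = Ct t y' i" by auto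
  have xh: "xhat gF B \<beta> i (arr y t i) (Ct t y i) (Zt t y) K = xhat gF B \<beta> i (arr y' t i) (Ct t y' i) (Zt t y') K"
    if i: "i < N" for i
    unfolding IH(1) IH(2)[OF i] using Suc.prems i by (intro xhat_cong) (auto simp: arr_def)
  have Dl: "Dl (arr y t) (Ct t y) (Zt t y) i = Dl (arr y' t) (Ct t y') (Zt t y') i" if i: "i < N" for i
    using xh[OF i] IH i by (simp add: Dl_def Delta_def)
  have Db: "Dbar (arr y t) (Ct t y) (Zt t y) = Dbar (arr y' t) (Ct t y') (Zt t y')"
    unfolding Dbar_def using Dl by (intro arg_cong[where f="\<lambda>x. (1 / real N) *\<^sub>R x"] sum.cong) auto
  show ?case
    using Db IH Dl by (auto simp: Zt_Suc Ct_Suc rz_def rc_def)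
qed

lemma Xk_cong:
  assumes i: "i < N" and "\<forall>t'<t. \<forall>i<N. \<forall>k<K. \<forall>b<B. y (t', i, k, b) = y' (t', i, k, b)"
    and "\<forall>k'<k. \<forall>b<B. y (t, i, k', b) = y' (t, i, k', b)"
  shows "Xk t i k y = Xk t i k y'"
proof -
  from st_cong[OF assms(2)] i have "Zt t y = Zt t y'" "Ct t y i = Ct t y' i" by auto
  then show ?thesis unfolding Xk_def xk_def using assms(3)
    by (simp, intro xhat_cong) (auto simp: arr_def)
qed

lemma nz_eq: "nz (arr y t) (Ct t y) (Zt t y) i k = (1 / real B) *\<^sub>R (\<Sum>b<B. Ge i (Xk t i k y) (y (t, i, k, b)))"
  using B_pos by (simp add: nz_def gb_def Ge_def Xk_def sum_subtractf scaleR_diff_right sum_constant_scaleR arr_def)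

lemma prox_cont: "continuous_on UNIV (prox \<alpha> h)"
proof -
  have lip: "norm (prox \<alpha> h x - prox \<alpha> h y) \<le> (1 / (1 - \<alpha> * \<rho>)) * norm (x - y)" for x y
  proof -
    have p: "1 - \<alpha> * \<rho> > 0" using ar by simp
    have "(1 - \<alpha> * \<rho>) * norm (prox \<alpha> h x - prox \<alpha> h y) \<le> norm (x - y)"
      by (rule prox_lip[OF weakly_convex rho_nonneg alpha_pos ar(2)])
    then show ?thesis using p by (simp add: field_simps)
  qed
  show ?thesis
  proof (rule lipschitz_on_continuous_on)
    show "(1 / (1 - \<alpha> * \<rho>))-lipschitz_on UNIV (prox \<alpha> h)"
      using lip by (intro lipschitz_onI) (auto simp: dist_norm, use ar in simp)
  qed
qed

lemma prox_meas[measurable]: "prox \<alpha> h \<in> borel_measurable borel"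
  using prox_cont by (intro borel_measurable_continuous_onI) simp

lemma comp_prox_meas: "X \<in> borel_measurable M \<Longrightarrow> (\<lambda>y. prox \<alpha> h (X y)) \<in> borel_measurable M"
  using measurable_compose[OF _ prox_meas] by blast

lemma coord_meas: "(t, i, k, b) \<in> IT \<Longrightarrow> (\<lambda>y. y (t, i, k, b)) \<in> measurable PP (D i)"
  unfolding PP_def using measurable_component_singleton[of "(t, i, k, b)" IT Dx]
  by (simp add: IT_def Dx_eq)

lemma gF_comp:
  assumes "(t, i, k, b) \<in> IT" and X: "X \<in> borel_measurable PP"
  shows "(\<lambda>y. gF i (X y) (y (t, i, k, b))) \<in> borel_measurable PP"
proof -
  have i: "i < N" using assms by (simp add: IT_def)
  have "(\<lambda>y. (X y, y (t, i, k, b))) \<in> measurable PP (borel \<Otimes>\<^sub>M D i)"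
    using X coord_meas[OF assms(1)] by (rule measurable_Pair)
  moreover have "(\<lambda>(x, s). gF i x s) \<in> borel_measurable (borel \<Otimes>\<^sub>M D i)" using gF_meas i by blast
  ultimately have "(\<lambda>y. (\<lambda>(x, s). gF i x s) (X y, y (t, i, k, b))) \<in> borel_measurable PP"
    by (rule measurable_compose)
  then show ?thesis by simp
qed

lemma gradf_cont: "i < N \<Longrightarrow> continuous_on UNIV (gradf i)"
proof (rule lipschitz_on_continuous_on)
  assume i: "i < N"
  show "L-lipschitz_on UNIV (gradf i)"
    using gradf_lip[OF i] L_pos by (intro lipschitz_onI) (auto simp: dist_norm)
qed

lemma gradf_meas: "i < N \<Longrightarrow> X \<in> borel_measurable M \<Longrightarrow> (\<lambda>y. gradf i (X y)) \<in> borel_measurable M"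
  using measurable_compose[OF _ borel_measurable_continuous_onI[OF gradf_cont]] by blast

lemma Xk_Suc: "Xk t i (Suc k) y = Xk t i k y - \<beta> *\<^sub>R ((1 / real B) *\<^sub>R (\<Sum>b<B. gF i (Xk t i k y) (y (t, i, k, b))) + Ct t y i)"
  by (simp add: Xk_def xk_Suc gb_def arr_def)

lemma Xk_0: "Xk t i 0 y = Zt t y" by (simp add: Xk_def xk_0)

lemma Xk_meas:
  assumes t: "t < T" and i: "i < N" and k: "k \<le> K"
    and Zm: "Zt t \<in> borel_measurable PP" and Cm: "(\<lambda>y. Ct t y i) \<in> borel_measurable PP"
  shows "Xk t i k \<in> borel_measurable PP"
  using k
proof (induction k)
  case 0 then show ?case using Zm by (simp add: Xk_0[abs_def])
next
  case (Suc k)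
  then have IH: "Xk t i k \<in> borel_measurable PP" by simp
  have g: "(\<lambda>y. gF i (Xk t i k y) (y (t, i, k, b))) \<in> borel_measurable PP" if "b < B" for b
    using that Suc.prems t i by (intro gF_comp IH) (auto simp: IT_def)
  have "(\<lambda>y. Xk t i k y - \<beta> *\<^sub>R ((1 / real B) *\<^sub>R (\<Sum>b<B. gF i (Xk t i k y) (y (t, i, k, b))) + Ct t y i))
      \<in> borel_measurable PP"
    using IH g Cm by measurable
  then show ?case by (simp add: Xk_Suc[abs_def])
qed

lemma Dl_Xk: "Dl (arr y t) (Ct t y) (Zt t y) i = (1 / (\<beta> * real K)) *\<^sub>R (Zt t y - Xk t i K y)"
  by (simp add: Dl_def Delta_def Xk_def xk_def arr_def)

lemma st_meas:
  assumes "t \<le> T"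
  shows "Zt t \<in> borel_measurable PP \<and> (\<forall>i<N. (\<lambda>y. Ct t y i) \<in> borel_measurable PP)"
  using assms
proof (induction t)
  case 0 then show ?case by (simp add: Zt_0[abs_def] Ct_0[abs_def])
next
  case (Suc t)
  then have t: "t < T" and Zm: "Zt t \<in> borel_measurable PP" and Cm: "\<And>i. i < N \<Longrightarrow> (\<lambda>y. Ct t y i) \<in> borel_measurable PP"
    by auto
  have Xm: "\<And>i. i < N \<Longrightarrow> Xk t i K \<in> borel_measurable PP"
    using Xk_meas[OF t _ _ Zm Cm] by auto
  have Dlm: "(\<lambda>y. Dl (arr y t) (Ct t y) (Zt t y) i) \<in> borel_measurable PP" if "i < N" for i
    unfolding Dl_Xk using Zm Xm[OF that] by measurable
  have Dbm: "(\<lambda>y. Dbar (arr y t) (Ct t y) (Zt t y)) \<in> borel_measurable PP"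
    unfolding Dbar_def using Dlm by measurable
  have "Zt (Suc t) \<in> borel_measurable PP"
    unfolding Zt_Suc[abs_def] rz_def using Zm Dbm
    by (intro comp_prox_meas borel_measurable_diff borel_measurable_scaleR measurable_const) auto
  moreover have "(\<lambda>y. Ct (Suc t) y i) \<in> borel_measurable PP" if "i < N" for i
    unfolding Ct_Suc[abs_def] rc_def using Cm[OF that] Dbm Dlm[OF that] by measurable
  ultimately show ?case by blast
qed

lemma IT_finite: "finite IT"
proof -
  have "IT \<subseteq> {..<T} \<times> {..<N} \<times> {..<K} \<times> {..<B}" by (auto simp: IT_def)
  then show ?thesis by (rule finite_subset) auto
qed

lemma Ge_meas2: "i < N \<Longrightarrow> (\<lambda>(x, s). w *\<^sub>R Ge i x s) \<in> borel_measurable (borel \<Otimes>\<^sub>M D i)"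
proof -
  assume i: "i < N"
  have g: "(\<lambda>(x, s). gF i x s) \<in> borel_measurable (borel \<Otimes>\<^sub>M D i)" using gF_meas i by blast
  have "(\<lambda>p. gradf i (fst p)) \<in> borel_measurable (borel \<Otimes>\<^sub>M D i)"
    by (intro gradf_meas[OF i] measurable_fst'') simp
  then have "(\<lambda>p. w *\<^sub>R ((\<lambda>(x, s). gF i x s) p - gradf i (fst p))) \<in> borel_measurable (borel \<Otimes>\<^sub>M D i)"
    using g by measurable
  then show ?thesis by (simp add: Ge_def case_prod_beta)
qed

lemma key_D: assumes i: "i < N"
  shows "(\<integral>\<^sup>+ s. ennreal ((norm (v + w *\<^sub>R Ge i x s))\<^sup>2) \<partial>D i) \<le> ennreal ((norm v)\<^sup>2 + w\<^sup>2 * \<sigma>\<^sup>2)"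
proof (rule key1)
  show "prob_space (D i)" using D_prob i by blast
  have g: "(\<lambda>(x, s). gF i x s) \<in> borel_measurable (borel \<Otimes>\<^sub>M D i)" using gF_meas i by blast
  have "(\<lambda>s. (\<lambda>(x, s). gF i x s) (x, s)) \<in> borel_measurable (D i)"
    by (rule measurable_compose[OF _ g]) simp
  then show "Ge i x \<in> borel_measurable (D i)" by (simp add: Ge_def[abs_def])
  have ui: "integrable (D i) (gF i x)" "(\<integral>s. gF i x s \<partial>D i) = gradf i x" using unbiased i by auto
  interpret prob_space "D i" using D_prob i by blast
  show "integrable (D i) (Ge i x)" unfolding Ge_def[abs_def] using ui by simp
  show "(\<integral>s. Ge i x s \<partial>D i) = 0" unfolding Ge_def using ui by (simp add: prob_space)
  show "(\<integral>\<^sup>+ s. ennreal ((norm (Ge i x s))\<^sup>2) \<partial>D i) \<le> ennreal (\<sigma>\<^sup>2)"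
    using variance i by (simp add: Ge_def)
  show "\<sigma>\<^sup>2 \<ge> 0" by simp
qed

lemma core_PP:
  assumes l: "(t, i, k, b) \<in> IT"
    and Vm: "V \<in> borel_measurable PP" and Xm: "X \<in> borel_measurable PP"
    and Vi: "\<And>y s. y \<in> space PP \<Longrightarrow> s \<in> space (D i) \<Longrightarrow> V (y((t, i, k, b) := s)) = V y"
    and Xi: "\<And>y s. y \<in> space PP \<Longrightarrow> s \<in> space (D i) \<Longrightarrow> X (y((t, i, k, b) := s)) = X y"
  shows "(\<integral>\<^sup>+ y. ennreal ((norm (V y + w *\<^sub>R Ge i (X y) (y (t, i, k, b))))\<^sup>2) \<partial>PP)
      \<le> (\<integral>\<^sup>+ y. ennreal ((norm (V y))\<^sup>2) \<partial>PP) + ennreal (w\<^sup>2 * \<sigma>\<^sup>2)"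
proof -
  have i: "i < N" using l by (simp add: IT_def)
  have Dl: "Dx (t, i, k, b) = D i" using Dx_eq[OF i] .
  show ?thesis unfolding PP_def
  proof (rule core[where G="\<lambda>x s. w *\<^sub>R Ge i x s"])
    show "\<And>l. prob_space (Dx l)" by (rule Dx_prob)
    show "finite IT" by (rule IT_finite)
    show "(t, i, k, b) \<in> IT" by (rule l)
    show "V \<in> borel_measurable (PiM IT Dx)" using Vm by (simp add: PP_def)
    show "X \<in> borel_measurable (PiM IT Dx)" using Xm by (simp add: PP_def)
    show "\<And>y s. y \<in> space (PiM IT Dx) \<Longrightarrow> s \<in> space (Dx (t, i, k, b)) \<Longrightarrow> V (y((t, i, k, b) := s)) = V y"
      using Vi by (simp add: PP_def Dl)
    show "\<And>y s. y \<in> space (PiM IT Dx) \<Longrightarrow> s \<in> space (Dx (t, i, k, b)) \<Longrightarrow> X (y((t, i, k, b) := s)) = X y"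
      using Xi by (simp add: PP_def Dl)
    show "(\<lambda>(x, s). w *\<^sub>R Ge i x s) \<in> borel_measurable (borel \<Otimes>\<^sub>M Dx (t, i, k, b))"
      unfolding Dl by (rule Ge_meas2[OF i])
    show "\<And>x v. (\<integral>\<^sup>+ s. ennreal ((norm (v + w *\<^sub>R Ge i x s))\<^sup>2) \<partial>Dx (t, i, k, b)) \<le> ennreal ((norm v)\<^sup>2 + w\<^sup>2 * \<sigma>\<^sup>2)"
      unfolding Dl by (rule key_D[OF i])
    show "w\<^sup>2 * \<sigma>\<^sup>2 \<ge> 0" by simp
  qed
qed

lemma Ge_comp:
  assumes "(t, i, k, b) \<in> IT" and X: "X \<in> borel_measurable PP"
  shows "(\<lambda>y. Ge i (X y) (y (t, i, k, b))) \<in> borel_measurable PP"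
proof -
  have i: "i < N" using assms by (simp add: IT_def)
  show ?thesis unfolding Ge_def using gF_comp[OF assms] gradf_meas[OF i X] by measurable
qed

lemma level_b:
  assumes t: "t < T" and i: "i < N" and k: "k < K" and m: "m \<le> B"
    and Vm: "V \<in> borel_measurable PP" and Xm: "X \<in> borel_measurable PP"
    and Vi: "\<And>b y s. b < B \<Longrightarrow> y \<in> space PP \<Longrightarrow> s \<in> space (D i) \<Longrightarrow> V (y((t, i, k, b) := s)) = V y"
    and Xi: "\<And>b y s. b < B \<Longrightarrow> y \<in> space PP \<Longrightarrow> s \<in> space (D i) \<Longrightarrow> X (y((t, i, k, b) := s)) = X y"
  shows "(\<integral>\<^sup>+ y. ennreal ((norm (V y + w *\<^sub>R (\<Sum>b<m. Ge i (X y) (y (t, i, k, b)))))\<^sup>2) \<partial>PP)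
      \<le> (\<integral>\<^sup>+ y. ennreal ((norm (V y))\<^sup>2) \<partial>PP) + ennreal (real m * (w\<^sup>2 * \<sigma>\<^sup>2))"
  using m
proof (induction m)
  case 0 then show ?case by simp
next
  case (Suc m)
  then have mB: "m < B" and IH: "(\<integral>\<^sup>+ y. ennreal ((norm (V y + w *\<^sub>R (\<Sum>b<m. Ge i (X y) (y (t, i, k, b)))))\<^sup>2) \<partial>PP)
      \<le> (\<integral>\<^sup>+ y. ennreal ((norm (V y))\<^sup>2) \<partial>PP) + ennreal (real m * (w\<^sup>2 * \<sigma>\<^sup>2))" by auto
  define V' where "V' y = V y + w *\<^sub>R (\<Sum>b<m. Ge i (X y) (y (t, i, k, b)))" for y
  have l: "(t, i, k, m) \<in> IT" using t i k mB by (simp add: IT_def)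
  have V'm: "V' \<in> borel_measurable PP"
  proof -
    have "(\<lambda>y. Ge i (X y) (y (t, i, k, b))) \<in> borel_measurable PP" if "b < m" for b
      using that mB t i k by (intro Ge_comp Xm) (auto simp: IT_def)
    then show ?thesis unfolding V'_def[abs_def] using Vm by measurable
  qed
  have V'i: "V' (y((t, i, k, m) := s)) = V' y" if "y \<in> space PP" "s \<in> space (D i)" for y s
    using Vi[OF mB that] Xi[OF mB that] by (simp add: V'_def)
  have eq: "V y + w *\<^sub>R (\<Sum>b<Suc m. Ge i (X y) (y (t, i, k, b))) = V' y + w *\<^sub>R Ge i (X y) (y (t, i, k, m))" for y
    by (simp add: V'_def algebra_simps)
  have "(\<integral>\<^sup>+ y. ennreal ((norm (V y + w *\<^sub>R (\<Sum>b<Suc m. Ge i (X y) (y (t, i, k, b)))))\<^sup>2) \<partial>PP)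
      = (\<integral>\<^sup>+ y. ennreal ((norm (V' y + w *\<^sub>R Ge i (X y) (y (t, i, k, m))))\<^sup>2) \<partial>PP)"
    unfolding eq ..
  also have "\<dots> \<le> (\<integral>\<^sup>+ y. ennreal ((norm (V' y))\<^sup>2) \<partial>PP) + ennreal (w\<^sup>2 * \<sigma>\<^sup>2)"
    by (rule core_PP[OF l V'm Xm V'i Xi[OF mB]])
  also have "\<dots> \<le> (\<integral>\<^sup>+ y. ennreal ((norm (V y))\<^sup>2) \<partial>PP) + ennreal (real m * (w\<^sup>2 * \<sigma>\<^sup>2)) + ennreal (w\<^sup>2 * \<sigma>\<^sup>2)"
    using IH unfolding V'_def by (intro add_right_mono)
  also have "\<dots> = (\<integral>\<^sup>+ y. ennreal ((norm (V y))\<^sup>2) \<partial>PP) + ennreal (real (Suc m) * (w\<^sup>2 * \<sigma>\<^sup>2))"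
    by (simp add: add.assoc ennreal_plus[symmetric] algebra_simps del: ennreal_plus)
  finally show ?case .
qed

lemma Xk_meas': "t < T \<Longrightarrow> i < N \<Longrightarrow> k \<le> K \<Longrightarrow> Xk t i k \<in> borel_measurable PP"
  using Xk_meas st_meas[of t] by auto

lemma Xk_inv:
  assumes i: "i < N" and kk: "k \<le> k'"
  shows "Xk t i k (y((t, i', k', b) := s)) = Xk t i k y"
  by (rule Xk_cong[OF i]) (use kk in auto)

lemma level_k:
  assumes t: "t < T" and i: "i < N" and m: "m \<le> K"
  shows "(\<integral>\<^sup>+ y. ennreal ((norm (w *\<^sub>R (\<Sum>k<m. \<Sum>b<B. Ge i (Xk t i k y) (y (t, i, k, b)))))\<^sup>2) \<partial>PP)
      \<le> ennreal (real m * (real B * (w\<^sup>2 * \<sigma>\<^sup>2)))"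
  using m
proof (induction m)
  case 0 then show ?case by simp
next
  case (Suc m)
  then have mK: "m < K" and IH: "(\<integral>\<^sup>+ y. ennreal ((norm (w *\<^sub>R (\<Sum>k<m. \<Sum>b<B. Ge i (Xk t i k y) (y (t, i, k, b)))))\<^sup>2) \<partial>PP)
      \<le> ennreal (real m * (real B * (w\<^sup>2 * \<sigma>\<^sup>2)))" by auto
  define V where "V y = w *\<^sub>R (\<Sum>k<m. \<Sum>b<B. Ge i (Xk t i k y) (y (t, i, k, b)))" for y
  have Vm: "V \<in> borel_measurable PP"
  proof -
    have "(\<lambda>y. Ge i (Xk t i k y) (y (t, i, k, b))) \<in> borel_measurable PP" if "k < m" "b < B" for k b
      using that mK t i by (intro Ge_comp Xk_meas') (auto simp: IT_def)
    then show ?thesis unfolding V_def[abs_def] by measurable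
  qed
  have Vi: "V (y((t, i, m, b) := s)) = V y" if "b < B" for b y s
  proof -
    have "Xk t i k (y((t, i, m, b) := s)) = Xk t i k y" if "k < m" for k
      using Xk_inv[OF i, of k m] that by simp
    then show ?thesis unfolding V_def by (intro arg_cong[where f="\<lambda>x. w *\<^sub>R x"] sum.cong) auto
  qed
  have Xi: "Xk t i m (y((t, i, m, b) := s)) = Xk t i m y" for b y s
    using Xk_inv[OF i, of m m] by simp
  have eq: "w *\<^sub>R (\<Sum>k<Suc m. \<Sum>b<B. Ge i (Xk t i k y) (y (t, i, k, b)))
      = V y + w *\<^sub>R (\<Sum>b<B. Ge i (Xk t i m y) (y (t, i, m, b)))" for y
    by (simp add: V_def algebra_simps)
  have "(\<integral>\<^sup>+ y. ennreal ((norm (w *\<^sub>R (\<Sum>k<Suc m. \<Sum>b<B. Ge i (Xk t i k y) (y (t, i, k, b)))))\<^sup>2) \<partial>PP)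
      = (\<integral>\<^sup>+ y. ennreal ((norm (V y + w *\<^sub>R (\<Sum>b<B. Ge i (Xk t i m y) (y (t, i, m, b)))))\<^sup>2) \<partial>PP)"
    unfolding eq ..
  also have "\<dots> \<le> (\<integral>\<^sup>+ y. ennreal ((norm (V y))\<^sup>2) \<partial>PP) + ennreal (real B * (w\<^sup>2 * \<sigma>\<^sup>2))"
    by (rule level_b[OF t i mK order_refl Vm Xk_meas'[OF t i]]) (use mK Vi Xi in auto)
  also have "\<dots> \<le> ennreal (real m * (real B * (w\<^sup>2 * \<sigma>\<^sup>2))) + ennreal (real B * (w\<^sup>2 * \<sigma>\<^sup>2))"
    using IH unfolding V_def by (intro add_right_mono)
  also have "\<dots> = ennreal (real (Suc m) * (real B * (w\<^sup>2 * \<sigma>\<^sup>2)))"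
    by (simp add: ennreal_plus[symmetric] algebra_simps del: ennreal_plus)
  finally show ?case .
qed

lemma nz_meas: "t < T \<Longrightarrow> i < N \<Longrightarrow> k < K \<Longrightarrow> (\<lambda>y. nz (arr y t) (Ct t y) (Zt t y) i k) \<in> borel_measurable PP"
  unfolding nz_eq using Ge_comp[OF _ Xk_meas'] by (auto simp: IT_def)

lemma nsq_int: assumes t: "t < T"
  shows "(\<integral>\<^sup>+ y. ennreal (nsq (arr y t) (Ct t y) (Zt t y)) \<partial>PP) \<le> ennreal (\<sigma>\<^sup>2 / (real B * real K))"
  unfolding nsq_def
proof (rule nn_avg_le[OF N_pos])
  fix i assume i: "i < N"
  have eq: "(1 / real K) *\<^sub>R (\<Sum>k<K. nz (arr y t) (Ct t y) (Zt t y) i k)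
      = (1 / (real K * real B)) *\<^sub>R (\<Sum>k<K. \<Sum>b<B. Ge i (Xk t i k y) (y (t, i, k, b)))" for y
    unfolding nz_eq by (simp add: scaleR_sum_right[symmetric])
  show "(\<lambda>y. (norm ((1 / real K) *\<^sub>R (\<Sum>k<K. nz (arr y t) (Ct t y) (Zt t y) i k)))\<^sup>2) \<in> borel_measurable PP"
    using nz_meas[OF t i] by measurable
  have "(\<integral>\<^sup>+ y. ennreal ((norm ((1 / real K) *\<^sub>R (\<Sum>k<K. nz (arr y t) (Ct t y) (Zt t y) i k)))\<^sup>2) \<partial>PP)
      = (\<integral>\<^sup>+ y. ennreal ((norm ((1 / (real K * real B)) *\<^sub>R (\<Sum>k<K. \<Sum>b<B. Ge i (Xk t i k y) (y (t, i, k, b)))))\<^sup>2) \<partial>PP)"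
    unfolding eq ..
  also have "\<dots> \<le> ennreal (real K * (real B * ((1 / (real K * real B))\<^sup>2 * \<sigma>\<^sup>2)))"
    by (rule level_k[OF t i order_refl])
  also have "real K * (real B * ((1 / (real K * real B))\<^sup>2 * \<sigma>\<^sup>2)) = \<sigma>\<^sup>2 / (real B * real K)"
    using K_pos B_pos by (simp add: power2_eq_square field_simps)
  finally show "(\<integral>\<^sup>+ y. ennreal ((norm ((1 / real K) *\<^sub>R (\<Sum>k<K. nz (arr y t) (Ct t y) (Zt t y) i k)))\<^sup>2) \<partial>PP)
      \<le> ennreal (\<sigma>\<^sup>2 / (real B * real K))" .
qed auto

lemma zsq_int: assumes t: "t < T"
  shows "(\<integral>\<^sup>+ y. ennreal (zsq (arr y t) (Ct t y) (Zt t y)) \<partial>PP) \<le> ennreal (\<sigma>\<^sup>2 / real B)"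
  unfolding zsq_def
proof (rule nn_avg_le[OF N_pos])
  fix i assume i: "i < N"
  show "(\<lambda>y. (1 / real K) * (\<Sum>k<K. (norm (nz (arr y t) (Ct t y) (Zt t y) i k))\<^sup>2)) \<in> borel_measurable PP"
    using nz_meas[OF t i] by measurable
  show "(\<integral>\<^sup>+ y. ennreal ((1 / real K) * (\<Sum>k<K. (norm (nz (arr y t) (Ct t y) (Zt t y) i k))\<^sup>2)) \<partial>PP)
      \<le> ennreal (\<sigma>\<^sup>2 / real B)"
  proof (rule nn_avg_le[OF K_pos])
    fix k assume k: "k < K"
    show "(\<lambda>y. (norm (nz (arr y t) (Ct t y) (Zt t y) i k))\<^sup>2) \<in> borel_measurable PP"
      using nz_meas[OF t i k] by measurable
    have "(\<integral>\<^sup>+ y. ennreal ((norm (nz (arr y t) (Ct t y) (Zt t y) i k))\<^sup>2) \<partial>PP)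
        = (\<integral>\<^sup>+ y. ennreal ((norm ((\<lambda>y. 0) y + (1 / real B) *\<^sub>R (\<Sum>b<B. Ge i (Xk t i k y) (y (t, i, k, b)))))\<^sup>2) \<partial>PP)"
      unfolding nz_eq by simp
    also have "\<dots> \<le> (\<integral>\<^sup>+ y. ennreal ((norm ((\<lambda>y. 0::'a) y))\<^sup>2) \<partial>PP) + ennreal (real B * ((1 / real B)\<^sup>2 * \<sigma>\<^sup>2))"
      by (rule level_b[OF t i k order_refl _ Xk_meas'[OF t i]]) (use Xk_inv[OF i] k in auto)
    also have "\<dots> = ennreal (\<sigma>\<^sup>2 / real B)"
      using B_pos by (simp add: power2_eq_square field_simps)
    finally show "(\<integral>\<^sup>+ y. ennreal ((norm (nz (arr y t) (Ct t y) (Zt t y) i k))\<^sup>2) \<partial>PP) \<le> ennreal (\<sigma>\<^sup>2 / real B)" .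
  qed auto
qed (auto simp: sum_nonneg)


end


context fedp begin
lemma h_cont: "continuous_on UNIV h"
proof -
  have cg: "continuous_on UNIV (\<lambda>x. h x + \<rho> / 2 * (norm x)\<^sup>2)"
    using convex_on_continuous[OF _ weakly_convex] by simp
  have "continuous_on UNIV (\<lambda>x. (h x + \<rho> / 2 * (norm x)\<^sup>2) - \<rho> / 2 * (norm x)\<^sup>2)"
    by (intro continuous_intros cg)
  then show ?thesis by simp
qed

lemma Bh_nonneg: "Bh \<ge> 0"
proof -
  have "(1 / \<alpha>) *\<^sub>R (0 - prox \<alpha> h 0) \<in> subdiff h (prox \<alpha> h 0)"
    by (rule prox_subdiff[OF weakly_convex rho_nonneg alpha_pos ar(2)])
  with subgrad_bdd have "(norm ((1 / \<alpha>) *\<^sub>R (0 - prox \<alpha> h 0)))\<^sup>2 \<le> Bh" by blast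
  then show ?thesis by (meson order_trans zero_le_power2)
qed

lemma PP_prob: "prob_space PP"
  unfolding PP_def by (rule prob_space_PiM) (use Dx_prob in auto)

lemma phi_meas: "X \<in> borel_measurable M \<Longrightarrow> (\<lambda>y. phi (X y)) \<in> borel_measurable M"
proof -
  assume X: "X \<in> borel_measurable M"
  have fm: "(\<lambda>y. f i (X y)) \<in> borel_measurable M" if "i < N" for i
    using measurable_compose[OF X borel_measurable_continuous_onI] f_cont that by auto
  have hm: "(\<lambda>y. h (X y)) \<in> borel_measurable M"
    using measurable_compose[OF X borel_measurable_continuous_onI[OF h_cont]] .
  show ?thesis unfolding phi_def using fm hm by measurable
qed

definition "Phit t y = Phi (Zt t y) (Ct t y)"

lemma Phit_meas: "t \<le> T \<Longrightarrow> Phit t \<in> borel_measurable PP"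
proof -
  assume t: "t \<le> T"
  have Zm: "Zt t \<in> borel_measurable PP" and Cm: "\<And>i. i < N \<Longrightarrow> (\<lambda>y. Ct t y i) \<in> borel_measurable PP"
    using st_meas[OF t] by auto
  have gm: "(\<lambda>y. gradf i (Zt t y)) \<in> borel_measurable PP" if "i < N" for i
    using gradf_meas[OF that Zm] .
  have gb: "(\<lambda>y. gbar (Zt t y)) \<in> borel_measurable PP"
    unfolding gbar_def using gm by measurable
  have "(\<lambda>y. Err (Zt t y) (Ct t y)) \<in> borel_measurable PP"
    unfolding Err_def using gm Cm gb by measurable
  then show ?thesis unfolding Phit_def[abs_def] Phi_def using phi_meas[OF Zm] by measurable
qed

lemma Phi_nonneg: "Phi z c \<ge> 0"
  using phistar_le alpha_pos by (simp add: Phi_def phi_def Err_def sum_nonneg)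

lemma nsq_nonneg: "nsq s c z \<ge> 0" by (simp add: nsq_def sum_nonneg)
lemma zsq_nonneg: "zsq s c z \<ge> 0" by (simp add: zsq_def sum_nonneg)

definition "rho = 1 - \<alpha> * \<mu> / 4"
definition "bb = \<alpha> * ((5/4) * Qc * (\<sigma>\<^sup>2 / (real B * real K)) + (25/4) * kk * (\<sigma>\<^sup>2 / real B) + 25 * kk * Bh)"

lemma rho_bounds: "rho \<ge> 0" "rho < 1"
proof -
  have "12 * (6 + dl) * r2 \<ge> 0" using r2_bounds dl_bounds by simp
  then show "rho \<ge> 0" using r2_bounds(2) by (simp add: rho_def)
  show "rho < 1" using alpha_pos mu_pos by (simp add: rho_def)
qed

lemma step_int: assumes t: "t < T"
  shows "(\<integral>\<^sup>+ y. ennreal (Phit (Suc t) y) \<partial>PP) \<le> ennreal rho * (\<integral>\<^sup>+ y. ennreal (Phit t y) \<partial>PP) + ennreal bb"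
proof -
  interpret PPp: prob_space PP by (rule PP_prob)
  define a1 where "a1 = \<alpha> * ((5/4) * Qc)"
  define a2 where "a2 = \<alpha> * ((25/4) * kk)"
  define a3 where "a3 = \<alpha> * (25 * kk * Bh)"
  have a0: "a1 \<ge> 0" "a2 \<ge> 0" "a3 \<ge> 0"
    using alpha_pos Q_le kk_bounds Bh_nonneg by (simp_all add: a1_def a2_def a3_def)
  have pw: "Phit (Suc t) y \<le> rho * Phit t y + a1 * nsq (arr y t) (Ct t y) (Zt t y)
      + a2 * zsq (arr y t) (Ct t y) (Zt t y) + a3" for y
    using round_ineq[OF Ct_sum[of t y], of "arr y t" "Zt t y"]
    by (simp add: Phit_def Zt_Suc Ct_Suc rho_def a1_def a2_def a3_def algebra_simps)
  have nm: "(\<lambda>y. nsq (arr y t) (Ct t y) (Zt t y)) \<in> borel_measurable PP"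
    unfolding nsq_def using nz_meas[OF t] by measurable
  have zm: "(\<lambda>y. zsq (arr y t) (Ct t y) (Zt t y)) \<in> borel_measurable PP"
    unfolding zsq_def using nz_meas[OF t] by measurable
  have Pm: "Phit t \<in> borel_measurable PP" using Phit_meas t by simp
  have "(\<integral>\<^sup>+ y. ennreal (Phit (Suc t) y) \<partial>PP)
      \<le> (\<integral>\<^sup>+ y. ennreal rho * ennreal (Phit t y) + ennreal a1 * ennreal (nsq (arr y t) (Ct t y) (Zt t y))
          + ennreal a2 * ennreal (zsq (arr y t) (Ct t y) (Zt t y)) + ennreal a3 \<partial>PP)"
  proof (rule nn_integral_mono)
    fix y
    have "ennreal (Phit (Suc t) y) \<le> ennreal (rho * Phit t y + a1 * nsq (arr y t) (Ct t y) (Zt t y)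
      + a2 * zsq (arr y t) (Ct t y) (Zt t y) + a3)" using pw by (rule ennreal_leI)
    also have "\<dots> = ennreal rho * ennreal (Phit t y) + ennreal a1 * ennreal (nsq (arr y t) (Ct t y) (Zt t y))
          + ennreal a2 * ennreal (zsq (arr y t) (Ct t y) (Zt t y)) + ennreal a3"
    proof -
      have p: "rho * Phit t y \<ge> 0" using rho_bounds Phi_nonneg by (simp add: Phit_def)
      have q: "a1 * nsq (arr y t) (Ct t y) (Zt t y) \<ge> 0" using a0 nsq_nonneg by simp
      have r: "a2 * zsq (arr y t) (Ct t y) (Zt t y) \<ge> 0" using a0 zsq_nonneg by simp
      have "ennreal (rho * Phit t y + a1 * nsq (arr y t) (Ct t y) (Zt t y) + a2 * zsq (arr y t) (Ct t y) (Zt t y) + a3)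
          = ennreal (rho * Phit t y) + ennreal (a1 * nsq (arr y t) (Ct t y) (Zt t y))
            + ennreal (a2 * zsq (arr y t) (Ct t y) (Zt t y)) + ennreal a3"
      proof -
        define P1 where "P1 = rho * Phit t y"
        define Q1 where "Q1 = a1 * nsq (arr y t) (Ct t y) (Zt t y)"
        define R1 where "R1 = a2 * zsq (arr y t) (Ct t y) (Zt t y)"
        have "ennreal (P1 + Q1 + R1 + a3) = ennreal (P1 + Q1 + R1) + ennreal a3"
          by (rule ennreal_plus) (use p q r a0 in \<open>auto simp: P1_def Q1_def R1_def\<close>)
        also have "ennreal (P1 + Q1 + R1) = ennreal (P1 + Q1) + ennreal R1"
          by (rule ennreal_plus) (use p q r in \<open>auto simp: P1_def Q1_def R1_def\<close>)
        also have "ennreal (P1 + Q1) = ennreal P1 + ennreal Q1"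
          by (rule ennreal_plus) (use p q in \<open>auto simp: P1_def Q1_def\<close>)
        finally show ?thesis by (simp add: P1_def Q1_def R1_def)
      qed
      also have "ennreal (rho * Phit t y) = ennreal rho * ennreal (Phit t y)"
        using rho_bounds Phi_nonneg by (intro ennreal_mult) (auto simp: Phit_def)
      also have "ennreal (a1 * nsq (arr y t) (Ct t y) (Zt t y)) = ennreal a1 * ennreal (nsq (arr y t) (Ct t y) (Zt t y))"
        using a0 nsq_nonneg by (intro ennreal_mult) auto
      also have "ennreal (a2 * zsq (arr y t) (Ct t y) (Zt t y)) = ennreal a2 * ennreal (zsq (arr y t) (Ct t y) (Zt t y))"
        using a0 zsq_nonneg by (intro ennreal_mult) auto
      finally show ?thesis .
    qed
    finally show "ennreal (Phit (Suc t) y) \<le> ennreal rho * ennreal (Phit t y) + ennreal a1 * ennreal (nsq (arr y t) (Ct t y) (Zt t y))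
          + ennreal a2 * ennreal (zsq (arr y t) (Ct t y) (Zt t y)) + ennreal a3" .
  qed
  also have "\<dots> = ennreal rho * (\<integral>\<^sup>+ y. ennreal (Phit t y) \<partial>PP) + ennreal a1 * (\<integral>\<^sup>+ y. ennreal (nsq (arr y t) (Ct t y) (Zt t y)) \<partial>PP)
      + ennreal a2 * (\<integral>\<^sup>+ y. ennreal (zsq (arr y t) (Ct t y) (Zt t y)) \<partial>PP) + ennreal a3"
    using Pm nm zm by (simp add: nn_integral_add nn_integral_cmult PPp.emeasure_space_1)
  also have "\<dots> \<le> ennreal rho * (\<integral>\<^sup>+ y. ennreal (Phit t y) \<partial>PP) + ennreal a1 * ennreal (\<sigma>\<^sup>2 / (real B * real K))
      + ennreal a2 * ennreal (\<sigma>\<^sup>2 / real B) + ennreal a3"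
    using nsq_int[OF t] zsq_int[OF t] by (intro add_mono mult_left_mono order_refl) auto
  finally have ch: "(\<integral>\<^sup>+ y. ennreal (Phit (Suc t) y) \<partial>PP) \<le> ennreal rho * (\<integral>\<^sup>+ y. ennreal (Phit t y) \<partial>PP) + ennreal a1 * ennreal (\<sigma>\<^sup>2 / (real B * real K))
      + ennreal a2 * ennreal (\<sigma>\<^sup>2 / real B) + ennreal a3" .
  have eqbb: "ennreal a1 * ennreal (\<sigma>\<^sup>2 / (real B * real K)) + ennreal a2 * ennreal (\<sigma>\<^sup>2 / real B) + ennreal a3 = ennreal bb"
  proof -
    have s0: "\<sigma>\<^sup>2 / (real B * real K) \<ge> 0" "\<sigma>\<^sup>2 / real B \<ge> 0" by simp_all
    have m1: "ennreal a1 * ennreal (\<sigma>\<^sup>2 / (real B * real K)) = ennreal (a1 * (\<sigma>\<^sup>2 / (real B * real K)))"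
      using a0 s0 by (intro ennreal_mult[symmetric]) auto
    have m2: "ennreal a2 * ennreal (\<sigma>\<^sup>2 / real B) = ennreal (a2 * (\<sigma>\<^sup>2 / real B))"
      using a0 s0 by (intro ennreal_mult[symmetric]) auto
    have u: "a1 * (\<sigma>\<^sup>2 / (real B * real K)) \<ge> 0" "a2 * (\<sigma>\<^sup>2 / real B) \<ge> 0" using a0 s0 by simp_all
    have "ennreal (a1 * (\<sigma>\<^sup>2 / (real B * real K))) + ennreal (a2 * (\<sigma>\<^sup>2 / real B)) + ennreal a3
        = ennreal (a1 * (\<sigma>\<^sup>2 / (real B * real K)) + a2 * (\<sigma>\<^sup>2 / real B) + a3)"
      using u a0 by (simp add: ennreal_plus[symmetric] del: ennreal_plus)
    also have "a1 * (\<sigma>\<^sup>2 / (real B * real K)) + a2 * (\<sigma>\<^sup>2 / real B) + a3 = bb"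
      by (simp add: bb_def a1_def a2_def a3_def algebra_simps)
    finally show ?thesis unfolding m1 m2 .
  qed
  show ?thesis using ch eqbb by (simp add: add.assoc)
qed

lemma bb_nonneg: "bb \<ge> 0"
  using alpha_pos Q_le kk_bounds Bh_nonneg B_pos K_pos by (simp add: bb_def)

lemma Phit_0: "Phit 0 y = Phi z0 c0" by (simp add: Phit_def Zt_0 Ct_0)

lemma iter_bound: "t \<le> T \<Longrightarrow> (\<integral>\<^sup>+ y. ennreal (Phit t y) \<partial>PP) \<le> ennreal (rho ^ t * Phi z0 c0 + bb * (\<Sum>j<t. rho ^ j))"
proof (induction t)
  case 0
  interpret PPp: prob_space PP by (rule PP_prob)
  show ?case by (simp add: Phit_0 PPp.emeasure_space_1)
next
  case (Suc t)
  then have t: "t < T" by simp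
  have nn: "rho ^ t * Phi z0 c0 + bb * (\<Sum>j<t. rho ^ j) \<ge> 0"
    using rho_bounds Phi_nonneg bb_nonneg by (simp add: sum_nonneg)
  have "(\<integral>\<^sup>+ y. ennreal (Phit (Suc t) y) \<partial>PP) \<le> ennreal rho * (\<integral>\<^sup>+ y. ennreal (Phit t y) \<partial>PP) + ennreal bb"
    by (rule step_int[OF t])
  also have "\<dots> \<le> ennreal rho * ennreal (rho ^ t * Phi z0 c0 + bb * (\<Sum>j<t. rho ^ j)) + ennreal bb"
    using Suc t by (intro add_right_mono mult_left_mono) auto
  also have "\<dots> = ennreal (rho * (rho ^ t * Phi z0 c0 + bb * (\<Sum>j<t. rho ^ j)) + bb)"
  proof -
    have "ennreal rho * ennreal (rho ^ t * Phi z0 c0 + bb * (\<Sum>j<t. rho ^ j)) = ennreal (rho * (rho ^ t * Phi z0 c0 + bb * (\<Sum>j<t. rho ^ j)))"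
      using nn rho_bounds by (intro ennreal_mult[symmetric]) auto
    moreover have "ennreal (rho * (rho ^ t * Phi z0 c0 + bb * (\<Sum>j<t. rho ^ j)) + bb)
       = ennreal (rho * (rho ^ t * Phi z0 c0 + bb * (\<Sum>j<t. rho ^ j))) + ennreal bb"
      using nn rho_bounds bb_nonneg by (intro ennreal_plus) auto
    ultimately show ?thesis by simp
  qed
  also have "rho * (rho ^ t * Phi z0 c0 + bb * (\<Sum>j<t. rho ^ j)) + bb = rho ^ Suc t * Phi z0 c0 + bb * (\<Sum>j<Suc t. rho ^ j)"
  proof -
    have "rho * (\<Sum>j<t. rho ^ j) = (\<Sum>j<t. rho ^ Suc j)" by (simp add: sum_distrib_left)
    moreover have "(\<Sum>j<Suc t. rho ^ j) = 1 + (\<Sum>j<t. rho ^ Suc j)"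
      by (subst sum.lessThan_Suc_shift) simp
    ultimately show ?thesis by (simp add: algebra_simps)
  qed
  finally show ?case .
qed

lemma geo_bound: "bb * (\<Sum>j<T. rho ^ j) \<le> 25 * \<sigma>\<^sup>2 / (\<mu> * real B * real K) + \<sigma>\<^sup>2 / (16 * \<mu> * real B) + Bh / (2 * \<mu>)"
proof -
  have r: "rho \<ge> 0" "rho < 1" by (rule rho_bounds)+
  have "(\<Sum>j<T. rho ^ j) \<le> 1 / (1 - rho)"
  proof -
    have "(\<Sum>j<T. rho ^ j) = (1 - rho ^ T) / (1 - rho)" using r by (simp add: sum_gp_strict)
    also have "\<dots> \<le> 1 / (1 - rho)" using r by (intro divide_right_mono) auto
    finally show ?thesis .
  qed
  then have "bb * (\<Sum>j<T. rho ^ j) \<le> bb * (1 / (1 - rho))" using bb_nonneg by (intro mult_left_mono)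
  also have "1 - rho = \<alpha> * \<mu> / 4" by (simp add: rho_def)
  also have "bb * (1 / (\<alpha> * \<mu> / 4)) = (5 * Qc) * \<sigma>\<^sup>2 / (\<mu> * real B * real K) + (25 * kk) * \<sigma>\<^sup>2 / (\<mu> * real B) + (100 * kk) * Bh / \<mu>"
    using alpha_pos mu_pos B_pos K_pos by (simp add: bb_def field_simps)
  also have "\<dots> \<le> 25 * \<sigma>\<^sup>2 / (\<mu> * real B * real K) + (1/16) * \<sigma>\<^sup>2 / (\<mu> * real B) + (1/2) * Bh / \<mu>"
  proof (intro add_mono divide_right_mono mult_right_mono)
    show "5 * Qc \<le> 25" using Q_le by simp
    show "25 * kk \<le> 1/16" using kk_bounds by simp
    show "100 * kk \<le> 1/2" using kk_bounds by simp
  qed (use mu_pos B_pos K_pos Bh_nonneg in auto)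
  also have "\<dots> = 25 * \<sigma>\<^sup>2 / (\<mu> * real B * real K) + \<sigma>\<^sup>2 / (16 * \<mu> * real B) + Bh / (2 * \<mu>)"
    by simp
  finally show ?thesis .
qed

end



theorem theorem2:
  fixes F :: "nat \<Rightarrow> 'a::euclidean_space \<Rightarrow> 'b \<Rightarrow> real"
    and gF :: "nat \<Rightarrow> 'a \<Rightarrow> 'b \<Rightarrow> 'a"
    and f :: "nat \<Rightarrow> 'a \<Rightarrow> real"
    and gradf :: "nat \<Rightarrow> 'a \<Rightarrow> 'a"
    and h :: "'a \<Rightarrow> real"
    and D :: "nat \<Rightarrow> 'b measure"
    and M :: "'w measure"
    and \<xi> :: "nat \<Rightarrow> nat \<Rightarrow> nat \<Rightarrow> nat \<Rightarrow> 'w \<Rightarrow> 'b"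
    and N K B T :: nat
    and L \<rho> \<mu> \<sigma> Bh \<alpha> \<beta> :: real
    and z0 :: 'a and c0 :: "nat \<Rightarrow> 'a"
    and fbar :: "'a \<Rightarrow> real" and gradfbar :: "'a \<Rightarrow> 'a" and \<phi> :: "'a \<Rightarrow> real"
    and \<phi>star :: real and z :: "nat \<Rightarrow> 'w \<Rightarrow> 'a" and c :: "nat \<Rightarrow> 'w \<Rightarrow> nat \<Rightarrow> 'a"
    and Err :: "nat \<Rightarrow> 'w \<Rightarrow> real" and Err0 \<delta> :: real
  assumes "fbar = (\<lambda>x. (1 / real N) * (\<Sum>i<N. f i x))"
    and "gradfbar = (\<lambda>x. (1 / real N) *\<^sub>R (\<Sum>i<N. gradf i x))"
    and "\<phi> = (\<lambda>x. fbar x + h x)"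
    and "\<phi>star = (INF x. \<phi> x)"
    and "z = (\<lambda>t \<omega>. fst (fedcanon gF h N K B \<alpha> \<beta> z0 c0 (\<lambda>t i k b. \<xi> t i k b \<omega>) t))"
    and "c = (\<lambda>t \<omega>. snd (fedcanon gF h N K B \<alpha> \<beta> z0 c0 (\<lambda>t i k b. \<xi> t i k b \<omega>) t))"
    and "Err = (\<lambda>t \<omega>. (1 / real N) *
                 (\<Sum>i<N. (norm (gradf i (z t \<omega>) + c t \<omega> i - gradfbar (z t \<omega>)))\<^sup>2))"
    and "Err0 = (1 / real N) * (\<Sum>i<N. (norm (gradf i z0 + c0 i - gradfbar z0))\<^sup>2)"
    and "\<delta> = 1 / (1 - \<alpha> * \<rho>)\<^sup>2"
    and N_pos: "N > 0" and K_pos: "K > 0" and B_pos: "B > 0" and T_ge: "T \<ge> 1"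
    (* probability model of the sampling, (A4) *)
    and M_prob: "prob_space M"
    and D_prob: "\<forall>i<N. prob_space (D i)"
    and \<xi>_distr: "\<forall>t i k b. i < N \<and> k < K \<and> b < B \<longrightarrow>
                      \<xi> t i k b \<in> measurable M (D i) \<and> distr M (D i) (\<xi> t i k b) = D i"
    and \<xi>_indep: "prob_space.indep_vars M (\<lambda>(t, i, k, b). D i) (\<lambda>(t, i, k, b). \<xi> t i k b)
                      {(t, i, k, b). i < N \<and> k < K \<and> b < B}"
    and gF_meas: "\<forall>i<N. (\<lambda>(x, s). gF i x s) \<in> borel_measurable (borel \<Otimes>\<^sub>M D i)"
    and f_def: "\<forall>i<N. \<forall>x. integrable (D i) (F i x) \<and> f i x = (\<integral>s. F i x s \<partial>D i)"
    and F_grad: "\<forall>i<N. \<forall>x. \<forall>s\<in>space (D i).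
                   ((\<lambda>y. F i y s) has_derivative (\<lambda>u. inner (gF i x s) u)) (at x)"
    and f_grad: "\<forall>i<N. \<forall>x. (f i has_derivative (\<lambda>u. inner (gradf i x) u)) (at x)"
    and unbiased: "\<forall>i<N. \<forall>x. integrable (D i) (gF i x) \<and> (\<integral>s. gF i x s \<partial>D i) = gradf i x"
    and variance: "\<forall>i<N. \<forall>x. (\<integral>\<^sup>+s. ennreal ((norm (gF i x s - gradf i x))\<^sup>2) \<partial>D i) \<le> ennreal (\<sigma>\<^sup>2)"
    (* (A2) *)
    and L_pos: "L > 0"
    and smooth: "\<forall>i<N. \<forall>x y. f i x - f i y - inner (gradf i y) (x - y) \<le> L / 2 * (norm (x - y))\<^sup>2
                         \<and> norm (gradf i x - gradf i y) \<le> L * norm (x - y)"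
    (* (A3) *)
    and rho_nonneg: "\<rho> \<ge> 0"
    and weakly_convex: "convex_on UNIV (\<lambda>x. h x + \<rho> / 2 * (norm x)\<^sup>2)"
    and subgrad_bdd: "\<forall>x. \<forall>v\<in>subdiff h x. (norm v)\<^sup>2 \<le> Bh"
    (* (A1) *)
    and bdd: "bdd_below (range \<phi>)"
    (* (A5) *)
    and mu_pos: "\<mu> > 0"
    and PL: "\<forall>x. (norm (Gmap \<alpha> h x (gradfbar x)))\<^sup>2 \<ge> 2 * \<mu> * (\<phi> x - \<phi>star)"
    (* algorithm inputs and step sizes *)
    and c0_sum: "(\<Sum>i<N. c0 i) = 0"
    and alpha_pos: "\<alpha> > 0" and beta_pos: "\<beta> > 0"
    and step_alpha: "0 < \<alpha> * (\<rho> + L) + 4 * \<alpha>\<^sup>2 * L\<^sup>2"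
                    "\<alpha> * (\<rho> + L) + 4 * \<alpha>\<^sup>2 * L\<^sup>2 \<le> min (1 / 2) ((4 * \<mu> * (\<rho> + L) + 64 * L\<^sup>2) / \<mu>\<^sup>2)"
    and step_beta: "12 * (6 + \<delta>) * \<beta>\<^sup>2 * (real K)\<^sup>2 * L\<^sup>2 \<le> min (1 / 16) (1 - \<alpha> * \<mu> / 4)"
  shows "(\<integral>\<^sup>+\<omega>. ennreal (\<phi> (z T \<omega>) - \<phi>star) \<partial>M) + ennreal \<alpha> * (\<integral>\<^sup>+\<omega>. ennreal (Err T \<omega>) \<partial>M)
         \<le> ennreal ((1 - \<alpha> * \<mu> / 4) ^ T * (\<phi> z0 - \<phi>star + \<alpha> * Err0)
                    + 25 * \<sigma>\<^sup>2 / (\<mu> * real B * real K) + \<sigma>\<^sup>2 / (16 * \<mu> * real B) + Bh / (2 * \<mu>))"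
proof -
  have phistar_le: "\<forall>x. \<phi>star \<le> \<phi> x"
    using bdd by (auto simp: assms(4) intro: cINF_lower)
  have f_cont: "\<forall>i<N. continuous_on UNIV (f i)"
  proof (intro allI impI)
    fix i assume i: "i < N"
    have "\<And>x. isCont (f i) x" using f_grad i has_derivative_continuous by blast
    then show "continuous_on UNIV (f i)" by (simp add: continuous_at_imp_continuous_on)
  qed
  interpret F: fedp gF f gradf h N K B L \<rho> \<mu> Bh \<alpha> \<beta> \<phi>star D \<sigma> z0 c0 T
  proof (unfold_locales)
    show "N > 0" "K > 0" "B > 0" "L > 0" "\<rho> \<ge> 0" "\<mu> > 0" "\<alpha> > 0" "\<beta> > 0"
      using N_pos K_pos B_pos L_pos rho_nonneg mu_pos alpha_pos beta_pos by auto
    show "\<forall>i<N. \<forall>x y. f i x - f i y - inner (gradf i y) (x - y) \<le> L / 2 * (norm (x - y))\<^sup>2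
                         \<and> norm (gradf i x - gradf i y) \<le> L * norm (x - y)" by (rule smooth)
    show "convex_on UNIV (\<lambda>x. h x + \<rho> / 2 * (norm x)\<^sup>2)" by (rule weakly_convex)
    show "\<forall>x. \<forall>v\<in>subdiff h x. (norm v)\<^sup>2 \<le> Bh" by (rule subgrad_bdd)
    show "\<alpha> * (\<rho> + L) + 4 * \<alpha>\<^sup>2 * L\<^sup>2 \<le> 1 / 2" using step_alpha(2) by simp
    show "12 * (6 + 1 / (1 - \<alpha> * \<rho>)\<^sup>2) * \<beta>\<^sup>2 * (real K)\<^sup>2 * L\<^sup>2 \<le> min (1 / 16) (1 - \<alpha> * \<mu> / 4)"
      using step_beta by (simp add: assms(9))
    show "\<forall>x. (norm (Gmap \<alpha> h x ((1 / real N) *\<^sub>R (\<Sum>i<N. gradf i x))))\<^sup>2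
                 \<ge> 2 * \<mu> * ((1 / real N) * (\<Sum>i<N. f i x) + h x - \<phi>star)"
      using PL by (simp add: assms(1,2,3))
    show "\<forall>x. \<phi>star \<le> (1 / real N) * (\<Sum>i<N. f i x) + h x"
      using phistar_le by (simp add: assms(1,3))
    show "\<forall>i<N. prob_space (D i)" by (rule D_prob)
    show "\<forall>i<N. (\<lambda>(x, s). gF i x s) \<in> borel_measurable (borel \<Otimes>\<^sub>M D i)" by (rule gF_meas)
    show "\<forall>i<N. \<forall>x. integrable (D i) (gF i x) \<and> (\<integral>s. gF i x s \<partial>D i) = gradf i x" by (rule unbiased)
    show "\<forall>i<N. \<forall>x. (\<integral>\<^sup>+s. ennreal ((norm (gF i x s - gradf i x))\<^sup>2) \<partial>D i) \<le> ennreal (\<sigma>\<^sup>2)" by (rule variance)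
    show "(\<Sum>i<N. c0 i) = 0" by (rule c0_sum)
    show "\<forall>i<N. continuous_on UNIV (f i)" by (rule f_cont)
  qed
  interpret Mp: prob_space M by (rule M_prob)
  define X where "X l = (case l of (t, i, k, b) \<Rightarrow> \<xi> t i k b)" for l
  define Xi where "Xi \<omega> = (\<lambda>l\<in>F.IT. X l \<omega>)" for \<omega>
  have Xm: "X l \<in> measurable M (F.Dx l)" if "l \<in> F.IT" for l
    using that \<xi>_distr by (auto simp: X_def F.IT_def F.Dx_eq)
  have Xd: "distr M (F.Dx l) (X l) = F.Dx l" if "l \<in> F.IT" for l
    using that \<xi>_distr by (auto simp: X_def F.IT_def F.Dx_eq)
  have Xim: "Xi \<in> measurable M F.PP"
    unfolding Xi_def[abs_def] F.PP_def by (rule measurable_restrict) (rule Xm)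
  have IT_sub: "F.IT \<subseteq> {(t, i, k, b). i < N \<and> k < K \<and> b < B}" by (auto simp: F.IT_def)
  have ind: "Mp.indep_vars F.Dx X F.IT"
  proof -
    have "Mp.indep_vars (\<lambda>(t, i, k, b). D i) (\<lambda>(t, i, k, b). \<xi> t i k b) F.IT"
      by (rule Mp.indep_vars_subset[OF \<xi>_indep IT_sub])
    moreover have "\<And>l. l \<in> F.IT \<Longrightarrow> (\<lambda>(t, i, k, b). D i) l = F.Dx l"
      by (auto simp: F.IT_def F.Dx_eq)
    moreover have "\<And>l. l \<in> F.IT \<Longrightarrow> (\<lambda>(t, i, k, b). \<xi> t i k b) l = X l"
      by (auto simp: X_def split: prod.splits)
    ultimately show ?thesis
      using Mp.indep_vars_cong[of F.IT F.IT "\<lambda>(t, i, k, b). \<xi> t i k b" X "\<lambda>(t, i, k, b). D i" F.Dx]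
      by blast
  qed
  have ITne: "F.IT \<noteq> {}"
  proof -
    have "(0, 0, 0, 0) \<in> F.IT" using T_ge N_pos K_pos B_pos by (simp add: F.IT_def)
    then show ?thesis by blast
  qed
  have distr: "distr M F.PP Xi = F.PP"
  proof -
    have "distr M (PiM F.IT F.Dx) (\<lambda>x. \<lambda>l\<in>F.IT. X l x) = (PiM F.IT (\<lambda>l. distr M (F.Dx l) (X l)))"
      using Mp.indep_vars_iff_distr_eq_PiM'[of F.IT X F.Dx] ITne Xm ind by blast
    also have "\<dots> = PiM F.IT F.Dx" by (rule PiM_cong) (auto simp: Xd)
    finally show ?thesis unfolding F.PP_def Xi_def[abs_def] .
  qed
  have zc_eq: "z T \<omega> = F.Zt T (Xi \<omega>) \<and> (\<forall>i<N. c T \<omega> i = F.Ct T (Xi \<omega>) i)" for \<omega>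
  proof -
    define y1 where "y1 = (\<lambda>(t, i, k, b). \<xi> t i k b \<omega>)"
    have a: "(\<lambda>t i k b. \<xi> t i k b \<omega>) = F.arr y1" by (simp add: F.arr_def y1_def)
    have "F.Zt T y1 = F.Zt T (Xi \<omega>) \<and> (\<forall>i<N. F.Ct T y1 i = F.Ct T (Xi \<omega>) i)"
      by (rule F.st_cong) (auto simp: y1_def Xi_def X_def F.IT_def)
    moreover have "z T \<omega> = F.Zt T y1" "c T \<omega> = F.Ct T y1"
      by (simp_all add: assms(5,6) a F.Zt_def F.Ct_def F.st_def)
    ultimately show ?thesis by simp
  qed
  have gbar_eq: "gradfbar = F.gbar" by (simp add: assms(2) F.gbar_def[abs_def])
  have phi_eq: "\<phi> = F.phi" by (simp add: assms(1,3) F.phi_def[abs_def])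
  have Err_eq: "Err T \<omega> = F.Err (F.Zt T (Xi \<omega>)) (F.Ct T (Xi \<omega>))" for \<omega>
    using zc_eq[of \<omega>] by (simp add: assms(7) F.Err_def gbar_eq)
  define g1 where "g1 y = ennreal (F.phi (F.Zt T y) - \<phi>star)" for y
  define g2 where "g2 y = ennreal (F.Err (F.Zt T y) (F.Ct T y))" for y
  have Zm: "F.Zt T \<in> borel_measurable F.PP" and Cm: "\<And>i. i < N \<Longrightarrow> (\<lambda>y. F.Ct T y i) \<in> borel_measurable F.PP"
    using F.st_meas[of T] by auto
  have g1m: "g1 \<in> borel_measurable F.PP"
    unfolding g1_def[abs_def] using F.phi_meas[OF Zm] by measurable
  have g2m: "g2 \<in> borel_measurable F.PP"
  proof -
    have gm: "(\<lambda>y. gradf i (F.Zt T y)) \<in> borel_measurable F.PP" if "i < N" for i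
      using F.gradf_meas[OF that Zm] .
    have gb: "(\<lambda>y. F.gbar (F.Zt T y)) \<in> borel_measurable F.PP"
      unfolding F.gbar_def using gm by measurable
    show ?thesis unfolding g2_def[abs_def] F.Err_def using gm Cm gb by measurable
  qed
  have "(\<integral>\<^sup>+\<omega>. ennreal (\<phi> (z T \<omega>) - \<phi>star) \<partial>M) + ennreal \<alpha> * (\<integral>\<^sup>+\<omega>. ennreal (Err T \<omega>) \<partial>M)
      = (\<integral>\<^sup>+\<omega>. g1 (Xi \<omega>) \<partial>M) + ennreal \<alpha> * (\<integral>\<^sup>+\<omega>. g2 (Xi \<omega>) \<partial>M)"
    using zc_eq by (simp add: g1_def g2_def Err_eq phi_eq)
  also have "\<dots> = (\<integral>\<^sup>+y. g1 y \<partial>F.PP) + ennreal \<alpha> * (\<integral>\<^sup>+y. g2 y \<partial>F.PP)"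
  proof -
    have "(\<integral>\<^sup>+\<omega>. g1 (Xi \<omega>) \<partial>M) = (\<integral>\<^sup>+y. g1 y \<partial>F.PP)"
      using nn_integral_distr[OF Xim, of g1] g1m distr by simp
    moreover have "(\<integral>\<^sup>+\<omega>. g2 (Xi \<omega>) \<partial>M) = (\<integral>\<^sup>+y. g2 y \<partial>F.PP)"
      using nn_integral_distr[OF Xim, of g2] g2m distr by simp
    ultimately show ?thesis by simp
  qed
  also have "\<dots> = (\<integral>\<^sup>+y. g1 y + ennreal \<alpha> * g2 y \<partial>F.PP)"
    using g1m g2m by (simp add: nn_integral_add nn_integral_cmult)
  also have "\<dots> = (\<integral>\<^sup>+y. ennreal (F.Phit T y) \<partial>F.PP)"
  proof (rule nn_integral_cong)
    fix y
    have p: "F.phi (F.Zt T y) - \<phi>star \<ge> 0" using phistar_le phi_eq by simp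
    have e: "F.Err (F.Zt T y) (F.Ct T y) \<ge> 0" by (simp add: F.Err_def sum_nonneg)
    have "ennreal (F.Phit T y) = ennreal (F.phi (F.Zt T y) - \<phi>star) + ennreal (\<alpha> * F.Err (F.Zt T y) (F.Ct T y))"
      unfolding F.Phit_def F.Phi_def using p e alpha_pos by (intro ennreal_plus) auto
    also have "ennreal (\<alpha> * F.Err (F.Zt T y) (F.Ct T y)) = ennreal \<alpha> * ennreal (F.Err (F.Zt T y) (F.Ct T y))"
      using e alpha_pos by (intro ennreal_mult) auto
    finally show "g1 y + ennreal \<alpha> * g2 y = ennreal (F.Phit T y)" by (simp add: g1_def g2_def)
  qed
  also have "\<dots> \<le> ennreal (F.rho ^ T * F.Phi z0 c0 + F.bb * (\<Sum>j<T. F.rho ^ j))"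
    by (rule F.iter_bound) simp
  also have "\<dots> \<le> ennreal ((1 - \<alpha> * \<mu> / 4) ^ T * (\<phi> z0 - \<phi>star + \<alpha> * Err0)
                    + 25 * \<sigma>\<^sup>2 / (\<mu> * real B * real K) + \<sigma>\<^sup>2 / (16 * \<mu> * real B) + Bh / (2 * \<mu>))"
  proof (rule ennreal_leI)
    have "F.Phi z0 c0 = \<phi> z0 - \<phi>star + \<alpha> * Err0"
      by (simp add: F.Phi_def F.Err_def assms(8) gbar_eq phi_eq)
    then show "F.rho ^ T * F.Phi z0 c0 + F.bb * (\<Sum>j<T. F.rho ^ j) \<le> (1 - \<alpha> * \<mu> / 4) ^ T * (\<phi> z0 - \<phi>star + \<alpha> * Err0)
                    + 25 * \<sigma>\<^sup>2 / (\<mu> * real B * real K) + \<sigma>\<^sup>2 / (16 * \<mu> * real B) + Bh / (2 * \<mu>)"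
      using F.geo_bound by (simp add: F.rho_def)
  qed
  finally show ?thesis .
qed


end
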